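(* For every $n\in\{0,\dots,N\}$ and $\mu\in[\mu_m,\mu_M]$ the map $x\mapsto V^N(x,n,\mu)$ is convex on $(0,\infty)$. Moreover, there is $L>0$ independent of $(n,\mu)$ such that $|V^N(x,n,\mu)-V^N(y,n,\mu)|\le L|x-y|$ for all $x,y\in(0,\infty)$.
   Context: Let $(\Omega,\mathcal G,\mathsf P)$ support a standard Brownian motion $(B_t)_{t\ge0}$ and, independent of it, the mortality process described below. Fix $\theta>0$, $\alpha\ge0$, $\sigma>0$, $\rho>0$, $\nu\in[0,1]$, $K\in\mathbb R$, $\hat\rho>0$, $0<\mu_m\le\mu_M<\infty$, $\hat\mu\in[\mu_m,\mu_M]$, and assume $\theta-\alpha-\rho-\mu_m<0$. For $x>0$, $X_t=x\exp((\theta-\alpha-\sigma^2/2)t+\sigma B_t)$ solves $dX_t=(\theta-\alpha)X_tdt+\sigma X_tdB_t$, $X_0=x$. Mortality: fix $N\in\mathbb N_0$, rates $\lambda_1,\dots,\lambda_N\ge0$, set $\lambda_n=0$ for $n\ge N+1$, and for $n\le N-1$, $\mu\in[\mu_m,\mu_M]$ let $q(n,\mu,\cdot)$ be a Borel probability measure on $[\mu_m,\mu_M]$, measurable in $\mu$. The process $(n_t,\mu_t)$ started at $(n,\mu)$ stays at $(n,\mu)$ for an exponential time $\xi$ of rate $\lambda_{n+1}$ ($\xi=\infty$ if the rate is $0$), then jumps to $(n+1,Z)$ with $Z\sim q(n,\mu,\cdot)$ independent of $\xi$, and then evolves in the same way. Let $\mathbb F$ be the augmented filtration generated by $B$ and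 $(n_t,\mu_t)$, $\mathcal T(\mathbb F)$ its stopping times with values in $[0,\infty]$ (terms discounted at $\tau$ are $0$ on $\{\tau=\infty\}$), and $\mathsf E_{x,n,\mu}$ the expectation with $X_0=x$, $(n_0,\mu_0)=(n,\mu)$. Define $\hat f(n,\mu):=(\hat\rho+\hat\mu)\mathsf E_{n,\mu}[\int_0^\infty e^{-\rho u-\int_0^u\mu_sds}du]$ and $$V^N(x,n,\mu):=\sup_{\tau\in\mathcal T(\mathbb F)}\mathsf E_{x,n,\mu}\Big[\int_0^\tau e^{-\int_0^t(\rho+\mu_s)ds}(\alpha+\nu\mu_t)X_tdt+e^{-\int_0^\tau(\rho+\mu_s)ds}\hat f(n_\tau,\mu_\tau)(X_\tau-K)\Big].$$ *)

theory Defs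
  imports "HOL-Probability.Probability"
begin

definition std_BM :: "'a measure \<Rightarrow> (real \<Rightarrow> 'a \<Rightarrow> real) \<Rightarrow> bool" where
  "std_BM M B \<longleftrightarrow>
     (\<forall>t. B t \<in> borel_measurable M) \<and>
     (\<forall>\<omega>\<in>space M. B 0 \<omega> = 0 \<and> continuous_on {0..} (\<lambda>t. B t \<omega>)) \<and>
     (\<forall>(ts :: nat \<Rightarrow> real) k. 0 \<le> ts 0 \<and> (\<forall>i<k. ts i < ts (Suc i)) \<longrightarrow>
        prob_space.indep_vars M (\<lambda>_. borel) (\<lambda>i \<omega>. B (ts (Suc i)) \<omega> - B (ts i) \<omega>) {..<k} \<and>
        (\<forall>i<k. distributed M lborel (\<lambda>\<omega>. B (ts (Suc i)) \<omega> - B (ts i) \<omega>)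
                 (\<lambda>y. ennreal (normal_density 0 (sqrt (ts (Suc i) - ts i)) y))))"

definition gen_sets :: "'a measure \<Rightarrow> ('a \<Rightarrow> real) set \<Rightarrow> 'a set set" where
  "gen_sets M fs = {f -` A \<inter> space M | f A. f \<in> fs \<and> A \<in> sets borel}"

section \<open>The mortality process, built from i.i.d. Exp(1) clocks E and i.i.d. U(0,1) variables U\<close>

definition hold_time :: "(nat \<Rightarrow> real) \<Rightarrow> (nat \<Rightarrow> 'a \<Rightarrow> real) \<Rightarrow> nat \<Rightarrow> nat \<Rightarrow> 'a \<Rightarrow> ennreal" where
  "hold_time lam E n0 j \<omega> =
     (if lam (n0 + j + 1) = 0 then \<infinity> else ennreal (E j \<omega> / lam (n0 + j + 1)))"

definition jump_time :: "(nat \<Rightarrow> real) \<Rightarrow> (nat \<Rightarrow> 'a \<Rightarrow> real) \<Rightarrow> nat \<Rightarrow> nat \<Rightarrow> 'a \<Rightarrow> ennreal" where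
  "jump_time lam E n0 j \<omega> = (\<Sum>i<j. hold_time lam E n0 i \<omega>)"

definition njumps :: "(nat \<Rightarrow> real) \<Rightarrow> (nat \<Rightarrow> 'a \<Rightarrow> real) \<Rightarrow> nat \<Rightarrow> real \<Rightarrow> 'a \<Rightarrow> nat" where
  "njumps lam E n0 t \<omega> = card {j. 0 < j \<and> jump_time lam E n0 j \<omega> \<le> ennreal t}"

text \<open>Successive marks: the new mark after the j-th jump is G (n0+j) (old mark) (U j),
  where G k m applied to a U(0,1) variable has law q(k,m,.).\<close>
fun mark :: "(nat \<Rightarrow> real \<Rightarrow> real \<Rightarrow> real) \<Rightarrow> (nat \<Rightarrow> 'a \<Rightarrow> real) \<Rightarrow> nat \<Rightarrow> real \<Rightarrow> nat \<Rightarrow> 'a \<Rightarrow> real" where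
  "mark G U n0 m0 0 \<omega> = m0"
| "mark G U n0 m0 (Suc j) \<omega> = G (n0 + j) (mark G U n0 m0 j \<omega>) (U j \<omega>)"

definition mort_n :: "(nat \<Rightarrow> real) \<Rightarrow> (nat \<Rightarrow> 'a \<Rightarrow> real) \<Rightarrow> nat \<Rightarrow> real \<Rightarrow> 'a \<Rightarrow> nat" where
  "mort_n lam E n0 t \<omega> = n0 + njumps lam E n0 t \<omega>"

definition mort_mu :: "(nat \<Rightarrow> real) \<Rightarrow> (nat \<Rightarrow> 'a \<Rightarrow> real) \<Rightarrow> (nat \<Rightarrow> 'a \<Rightarrow> real)
    \<Rightarrow> (nat \<Rightarrow> real \<Rightarrow> real \<Rightarrow> real) \<Rightarrow> nat \<Rightarrow> real \<Rightarrow> real \<Rightarrow> 'a \<Rightarrow> real" where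
  "mort_mu lam E U G n0 m0 t \<omega> = mark G U n0 m0 (njumps lam E n0 t \<omega>) \<omega>"

definition filt :: "'a measure \<Rightarrow> (real \<Rightarrow> 'a \<Rightarrow> real) \<Rightarrow> (nat \<Rightarrow> real) \<Rightarrow> (nat \<Rightarrow> 'a \<Rightarrow> real)
    \<Rightarrow> (nat \<Rightarrow> 'a \<Rightarrow> real) \<Rightarrow> (nat \<Rightarrow> real \<Rightarrow> real \<Rightarrow> real) \<Rightarrow> nat \<Rightarrow> real \<Rightarrow> real \<Rightarrow> 'a measure" where
  "filt M B lam E U G n0 m0 t = sigma (space M)
     (gen_sets M ({B s | s. 0 \<le> s \<and> s \<le> t}
                  \<union> {(\<lambda>\<omega>. real (mort_n lam E n0 s \<omega>)) | s. 0 \<le> s \<and> s \<le> t}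
                  \<union> {mort_mu lam E U G n0 m0 s | s. 0 \<le> s \<and> s \<le> t})
      \<union> null_sets M)"

definition is_stopping_time :: "'a measure \<Rightarrow> (real \<Rightarrow> 'a measure) \<Rightarrow> ('a \<Rightarrow> ennreal) \<Rightarrow> bool" where
  "is_stopping_time M F \<tau> \<longleftrightarrow> (\<forall>t\<ge>0. {\<omega>\<in>space M. \<tau> \<omega> \<le> ennreal t} \<in> sets (F t))"

definition Xproc :: "real \<Rightarrow> real \<Rightarrow> real \<Rightarrow> (real \<Rightarrow> 'a \<Rightarrow> real) \<Rightarrow> real \<Rightarrow> real \<Rightarrow> 'a \<Rightarrow> real" where
  "Xproc \<theta> \<alpha> \<sigma> B x t \<omega> = x * exp ((\<theta> - \<alpha> - \<sigma>\<^sup>2 / 2) * t + \<sigma> * B t \<omega>)"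

definition disc :: "real \<Rightarrow> (real \<Rightarrow> real) \<Rightarrow> real \<Rightarrow> real" where
  "disc \<rho> mupath t = exp (- (\<rho> * t + (LBINT s:{0..t}. mupath s)))"

definition fhat :: "'a measure \<Rightarrow> real \<Rightarrow> real \<Rightarrow> real \<Rightarrow> (nat \<Rightarrow> real) \<Rightarrow> (nat \<Rightarrow> 'a \<Rightarrow> real)
    \<Rightarrow> (nat \<Rightarrow> 'a \<Rightarrow> real) \<Rightarrow> (nat \<Rightarrow> real \<Rightarrow> real \<Rightarrow> real) \<Rightarrow> nat \<Rightarrow> real \<Rightarrow> real" where
  "fhat M \<rho> \<rho>h \<mu>h lam E U G k m = (\<rho>h + \<mu>h) *
     (\<integral>\<omega>. (LBINT u:{0..}. disc \<rho> (\<lambda>s. mort_mu lam E U G k m s \<omega>) u) \<partial>M)"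

definition payoff :: "'a measure \<Rightarrow> (real \<Rightarrow> 'a \<Rightarrow> real) \<Rightarrow> (nat \<Rightarrow> real) \<Rightarrow> (nat \<Rightarrow> 'a \<Rightarrow> real)
    \<Rightarrow> (nat \<Rightarrow> 'a \<Rightarrow> real) \<Rightarrow> (nat \<Rightarrow> real \<Rightarrow> real \<Rightarrow> real)
    \<Rightarrow> real \<Rightarrow> real \<Rightarrow> real \<Rightarrow> real \<Rightarrow> real \<Rightarrow> real \<Rightarrow> real \<Rightarrow> real
    \<Rightarrow> real \<Rightarrow> nat \<Rightarrow> real \<Rightarrow> ('a \<Rightarrow> ennreal) \<Rightarrow> 'a \<Rightarrow> real" where
  "payoff M B lam E U G \<theta> \<alpha> \<sigma> \<rho> \<nu> K \<rho>h \<mu>h x n0 m0 \<tau> \<omega> =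
     (let mu = (\<lambda>s. mort_mu lam E U G n0 m0 s \<omega>);
          X = (\<lambda>s. Xproc \<theta> \<alpha> \<sigma> B x s \<omega>)
      in (LBINT t:{t. 0 \<le> t \<and> ennreal t < \<tau> \<omega>}. disc \<rho> mu t * (\<alpha> + \<nu> * mu t) * X t)
         + (if \<tau> \<omega> = \<infinity> then 0
            else (let s = enn2real (\<tau> \<omega>) in
                  disc \<rho> mu s * fhat M \<rho> \<rho>h \<mu>h lam E U G (mort_n lam E n0 s \<omega>) (mu s) * (X s - K))))"

definition VN :: "'a measure \<Rightarrow> (real \<Rightarrow> 'a \<Rightarrow> real) \<Rightarrow> (nat \<Rightarrow> real) \<Rightarrow> (nat \<Rightarrow> 'a \<Rightarrow> real)
    \<Rightarrow> (nat \<Rightarrow> 'a \<Rightarrow> real) \<Rightarrow> (nat \<Rightarrow> real \<Rightarrow> real \<Rightarrow> real)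
    \<Rightarrow> real \<Rightarrow> real \<Rightarrow> real \<Rightarrow> real \<Rightarrow> real \<Rightarrow> real \<Rightarrow> real \<Rightarrow> real
    \<Rightarrow> real \<Rightarrow> nat \<Rightarrow> real \<Rightarrow> ereal" where
  "VN M B lam E U G \<theta> \<alpha> \<sigma> \<rho> \<nu> K \<rho>h \<mu>h x n0 m0 =
     (SUP \<tau> \<in> {\<tau>. is_stopping_time M (filt M B lam E U G n0 m0) \<tau>}.
        ereal (\<integral>\<omega>. payoff M B lam E U G \<theta> \<alpha> \<sigma> \<rho> \<nu> K \<rho>h \<mu>h x n0 m0 \<tau> \<omega> \<partial>M))"

end

theory Submission
  imports Defs
begin

lemma (in prob_space) indep_var_nn_integral:
  fixes X Y :: "'a \<Rightarrow> ennreal"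
  assumes "indep_var borel X borel Y"
  shows "(\<integral>\<^sup>+\<omega>. X \<omega> * Y \<omega> \<partial>M) = (\<integral>\<^sup>+\<omega>. X \<omega> \<partial>M) * (\<integral>\<^sup>+\<omega>. Y \<omega> \<partial>M)"
proof -
  have *: "(\<lambda>\<omega>. X \<omega> * Y \<omega>) = (\<lambda>\<omega>. \<Prod>i\<in>UNIV. (case_bool X Y i \<omega>))"
    by (simp add: UNIV_bool mult.commute)
  have **: "(\<lambda> _. borel) = case_bool borel borel"
    by (rule ext, metis (full_types) bool.simps(3) bool.simps(4))
  show ?thesis
    apply (subst *)
    apply (subst indep_vars_nn_integral)
    apply (auto)
    apply (subst **, subst indep_var_def [symmetric], rule assms)
    by (simp add: UNIV_bool mult.commute)
qed

definition Pprod :: "(nat \<Rightarrow> 'a \<Rightarrow> real) \<Rightarrow> nat \<Rightarrow> 'a \<Rightarrow> real" where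
  "Pprod W j \<omega> = (\<Prod>i<j. W i \<omega>)"

definition Vset :: "'a measure \<Rightarrow> (nat \<Rightarrow> 'a \<Rightarrow> real) \<Rightarrow> real \<Rightarrow> nat \<Rightarrow> 'a set" where
  "Vset M W l K = {\<omega>\<in>space M. \<exists>j\<le>K. l < Pprod W j \<omega>}"

lemma Pprod_meas[measurable]:
  assumes "\<And>i. W i \<in> borel_measurable M"
  shows "Pprod W j \<in> borel_measurable M"
  unfolding Pprod_def using assms by (intro borel_measurable_prod) auto

lemma Vset_meas[measurable]:
  assumes "\<And>i. W i \<in> borel_measurable M"
  shows "Vset M W l K \<in> sets M"
proof -
  have "Vset M W l K = (\<Union>j\<in>{..K}. {\<omega>\<in>space M. l < Pprod W j \<omega>})"
    by (auto simp: Vset_def)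
  also have "\<dots> \<in> sets M"
    using Pprod_meas[OF assms] by (intro sets.finite_UN) auto
  finally show ?thesis .
qed

lemma (in prob_space) discrete_ville_aux:
  assumes ind: "indep_vars (\<lambda>_. borel) W {..<K}"
    and nn: "\<And>i \<omega>. 0 \<le> W i \<omega>"
    and mean: "\<And>i. i < K \<Longrightarrow> (\<integral>\<^sup>+\<omega>. ennreal (W i \<omega>) \<partial>M) = 1"
    and rv: "\<And>i. W i \<in> borel_measurable M"
  shows "ennreal l * emeasure M (Vset M W l K)
     \<le> (\<integral>\<^sup>+\<omega>. ennreal (Pprod W K \<omega>) * indicator (Vset M W l K) \<omega> \<partial>M)"
  using ind mean
proof (induction K)
  case 0
  note [measurable] = Vset_meas[OF rv]
  have "ennreal l * emeasure M (Vset M W l 0) = (\<integral>\<^sup>+\<omega>. ennreal l * indicator (Vset M W l 0) \<omega> \<partial>M)"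
    by (simp add: nn_integral_cmult_indicator)
  also have "\<dots> \<le> (\<integral>\<^sup>+\<omega>. ennreal (Pprod W 0 \<omega>) * indicator (Vset M W l 0) \<omega> \<partial>M)"
    by (intro nn_integral_mono) (auto simp: Vset_def Pprod_def indicator_def)
  finally show ?case .
next
  case (Suc K)
  note [measurable] = Vset_meas[OF rv] Pprod_meas[OF rv]
  have indK: "indep_vars (\<lambda>_. borel) W {..<K}"
    using Suc.prems(1) by (rule indep_vars_subset) auto
  have IH: "ennreal l * emeasure M (Vset M W l K)
     \<le> (\<integral>\<^sup>+\<omega>. ennreal (Pprod W K \<omega>) * indicator (Vset M W l K) \<omega> \<partial>M)"
    using Suc.IH[OF indK] Suc.prems(2) by auto
  define D where "D = Vset M W l (Suc K) - Vset M W l K"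
  have D_meas[measurable]: "D \<in> sets M" unfolding D_def by measurable
  have VS: "Vset M W l (Suc K) = Vset M W l K \<union> D" "Vset M W l K \<inter> D = {}"
    by (auto simp: D_def Vset_def le_Suc_eq)
  have Pnn: "\<And>j \<omega>. 0 \<le> Pprod W j \<omega>" unfolding Pprod_def using nn by (simp add: prod_nonneg)
  have indv: "indep_var (PiM {..<K} (\<lambda>_. borel)) (\<lambda>\<omega>. restrict (\<lambda>i. W i \<omega>) {..<K})
                 (PiM {K} (\<lambda>_. borel)) (\<lambda>\<omega>. restrict (\<lambda>i. W i \<omega>) {K})"
    by (rule indep_var_restrict[OF Suc.prems(1)]) auto
  define f where "f v = ennreal (\<Prod>i<K. v i) * indicator {v. \<exists>j\<le>K. l < (\<Prod>i<j. v i)} v" for v :: "nat \<Rightarrow> real"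
  have f_meas: "f \<in> borel_measurable (PiM {..<K} (\<lambda>_. borel))"
  proof -
    have "{v \<in> space (PiM {..<K} (\<lambda>_. borel)). \<exists>j\<le>K. l < (\<Prod>i<j. v i)}
       = (\<Union>j\<in>{..K}. {v \<in> space (PiM {..<K} (\<lambda>_. borel)). l < (\<Prod>i<j. v i)})" by auto
    also have "\<dots> \<in> sets (PiM {..<K} (\<lambda>_. borel))"
    proof (intro sets.finite_UN ballI)
      fix j assume "j \<in> {..K}"
      then have "(\<lambda>v. \<Prod>i<j. v i) \<in> borel_measurable (PiM {..<K} (\<lambda>_. borel::real measure))"
        by (intro borel_measurable_prod) auto
      then show "{v \<in> space (PiM {..<K} (\<lambda>_. borel)). l < (\<Prod>i<j. v i)} \<in> sets (PiM {..<K} (\<lambda>_. borel))"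
        by measurable
    qed simp
    finally have S: "{v \<in> space (PiM {..<K} (\<lambda>_. borel)). \<exists>j\<le>K. l < (\<Prod>i<j. v i)} \<in> sets (PiM {..<K} (\<lambda>_. borel::real measure))" .
    have "(\<lambda>v. \<Prod>i<K. v i) \<in> borel_measurable (PiM {..<K} (\<lambda>_. borel::real measure))"
      by (intro borel_measurable_prod) auto
    moreover have "(\<lambda>v. indicator {v. \<exists>j\<le>K. l < (\<Prod>i<j. v i)} v :: ennreal) \<in> borel_measurable (PiM {..<K} (\<lambda>_. borel::real measure))"
      using S by (intro borel_measurable_indicator') auto
    ultimately show ?thesis unfolding f_def
      by (intro borel_measurable_times_ennreal measurable_compose[OF _ measurable_ennreal])
  qed
  have g_meas: "(\<lambda>v. ennreal (v K)) \<in> borel_measurable (PiM {K} (\<lambda>_. borel::real measure))"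
    by (intro measurable_compose[OF _ measurable_ennreal] measurable_component_singleton) auto
  have indv2: "indep_var borel (f \<circ> (\<lambda>\<omega>. restrict (\<lambda>i. W i \<omega>) {..<K}))
                 borel ((\<lambda>v. ennreal (v K)) \<circ> (\<lambda>\<omega>. restrict (\<lambda>i. W i \<omega>) {K}))"
    by (rule indep_var_compose[OF indv f_meas g_meas])
  have feq: "(f \<circ> (\<lambda>\<omega>. restrict (\<lambda>i. W i \<omega>) {..<K})) \<omega> = ennreal (Pprod W K \<omega>) * indicator (Vset M W l K) \<omega>"
    if om: "\<omega> \<in> space M" for \<omega>
  proof -
    have pj: "(\<Prod>i<j. restrict (\<lambda>i. W i \<omega>) {..<K} i) = Pprod W j \<omega>" if "j \<le> K" for j
      unfolding Pprod_def using that by (intro prod.cong) auto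
    have "(\<exists>j\<le>K. l < (\<Prod>i<j. restrict (\<lambda>i. W i \<omega>) {..<K} i)) \<longleftrightarrow> \<omega> \<in> Vset M W l K"
      using om pj by (auto simp: Vset_def)
    then show ?thesis using pj[of K] by (simp add: f_def indicator_def)
  qed
  have prodeq: "(\<integral>\<^sup>+\<omega>. ennreal (Pprod W (Suc K) \<omega>) * indicator (Vset M W l K) \<omega> \<partial>M)
      = (\<integral>\<^sup>+\<omega>. (f \<circ> (\<lambda>\<omega>. restrict (\<lambda>i. W i \<omega>) {..<K})) \<omega> * ((\<lambda>v. ennreal (v K)) \<circ> (\<lambda>\<omega>. restrict (\<lambda>i. W i \<omega>) {K})) \<omega> \<partial>M)"
    apply (intro nn_integral_cong)
    apply (subst feq, assumption)
    using nn Pnn by (simp add: Pprod_def ennreal_mult' prod_nonneg mult_ac)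
  also have "\<dots> = (\<integral>\<^sup>+\<omega>. (f \<circ> (\<lambda>\<omega>. restrict (\<lambda>i. W i \<omega>) {..<K})) \<omega> \<partial>M) * (\<integral>\<^sup>+\<omega>. ennreal (W K \<omega>) \<partial>M)"
    by (subst indep_var_nn_integral[OF indv2]) (simp add: comp_def)
  also have "\<dots> = (\<integral>\<^sup>+\<omega>. ennreal (Pprod W K \<omega>) * indicator (Vset M W l K) \<omega> \<partial>M)"
    using Suc.prems(2)[of K] apply simp
    apply (rule nn_integral_cong) using feq by (simp add: comp_def)
  finally have prodeq: "(\<integral>\<^sup>+\<omega>. ennreal (Pprod W (Suc K) \<omega>) * indicator (Vset M W l K) \<omega> \<partial>M)
      = (\<integral>\<^sup>+\<omega>. ennreal (Pprod W K \<omega>) * indicator (Vset M W l K) \<omega> \<partial>M)" .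
  have Dbound: "ennreal l * emeasure M D \<le> (\<integral>\<^sup>+\<omega>. ennreal (Pprod W (Suc K) \<omega>) * indicator D \<omega> \<partial>M)"
  proof -
    have "ennreal l * emeasure M D = (\<integral>\<^sup>+\<omega>. ennreal l * indicator D \<omega> \<partial>M)"
      by (simp add: nn_integral_cmult_indicator)
    also have "\<dots> \<le> (\<integral>\<^sup>+\<omega>. ennreal (Pprod W (Suc K) \<omega>) * indicator D \<omega> \<partial>M)"
    proof (intro nn_integral_mono)
      fix \<omega> assume "\<omega> \<in> space M"
      show "ennreal l * indicator D \<omega> \<le> ennreal (Pprod W (Suc K) \<omega>) * indicator D \<omega>"
      proof (cases "\<omega> \<in> D")
        case True
        then have "l < Pprod W (Suc K) \<omega>"
          by (auto simp: D_def Vset_def le_Suc_eq)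
        then show ?thesis using True by (auto intro!: ennreal_leI)
      qed simp
    qed
    finally show ?thesis .
  qed
  have "ennreal l * emeasure M (Vset M W l (Suc K)) = ennreal l * emeasure M (Vset M W l K) + ennreal l * emeasure M D"
    using plus_emeasure[of "Vset M W l K" M D] VS by (simp add: distrib_left[symmetric])
  also have "\<dots> \<le> (\<integral>\<^sup>+\<omega>. ennreal (Pprod W (Suc K) \<omega>) * indicator (Vset M W l K) \<omega> \<partial>M)
       + (\<integral>\<^sup>+\<omega>. ennreal (Pprod W (Suc K) \<omega>) * indicator D \<omega> \<partial>M)"
    using IH Dbound prodeq by (intro add_mono) auto
  also have "\<dots> = (\<integral>\<^sup>+\<omega>. ennreal (Pprod W (Suc K) \<omega>) * indicator (Vset M W l K) \<omega>
        + ennreal (Pprod W (Suc K) \<omega>) * indicator D \<omega> \<partial>M)"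
    by (rule nn_integral_add[symmetric]) auto
  also have "\<dots> = (\<integral>\<^sup>+\<omega>. ennreal (Pprod W (Suc K) \<omega>) * indicator (Vset M W l (Suc K)) \<omega> \<partial>M)"
    apply (intro nn_integral_cong)
    using VS by (auto simp: indicator_def)
  finally show ?case .
qed

lemma (in prob_space) discrete_ville:
  assumes ind: "indep_vars (\<lambda>_. borel) W {..<K}"
    and nn: "\<And>i \<omega>. 0 \<le> W i \<omega>"
    and mean: "\<And>i. i < K \<Longrightarrow> (\<integral>\<^sup>+\<omega>. ennreal (W i \<omega>) \<partial>M) = 1"
    and rv: "\<And>i. W i \<in> borel_measurable M"
  shows "ennreal l * emeasure M (Vset M W l K) \<le> 1"
proof -
  note [measurable] = Vset_meas[OF rv] Pprod_meas[OF rv]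
  have "ennreal l * emeasure M (Vset M W l K)
     \<le> (\<integral>\<^sup>+\<omega>. ennreal (Pprod W K \<omega>) * indicator (Vset M W l K) \<omega> \<partial>M)"
    by (rule discrete_ville_aux[OF ind nn mean rv])
  also have "\<dots> \<le> (\<integral>\<^sup>+\<omega>. ennreal (Pprod W K \<omega>) \<partial>M)"
    by (intro nn_integral_mono) (auto simp: indicator_def)
  also have "\<dots> = (\<integral>\<^sup>+\<omega>. (\<Prod>i\<in>{..<K}. ennreal (W i \<omega>)) \<partial>M)"
    unfolding Pprod_def using nn by (intro nn_integral_cong) (simp add: prod_ennreal)
  also have "\<dots> = (\<Prod>i\<in>{..<K}. \<integral>\<^sup>+\<omega>. ennreal (W i \<omega>) \<partial>M)"
    by (rule indep_vars_nn_integral) (auto intro!: indep_vars_compose2[OF ind])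
  also have "\<dots> = 1" using mean by simp
  finally show ?thesis .
qed

lemma ennreal_term_le_suminf: "(f::nat\<Rightarrow>ennreal) k \<le> (\<Sum>i. f i)"
  by (metis dual_order.asym ennreal_suminf_lessD le_less_linear)

lemma ennreal_le_inv:
  assumes "0 < l" "ennreal l * e \<le> 1"
  shows "e \<le> ennreal (1 / l)"
proof -
  have "e = ennreal (1/l) * (ennreal l * e)"
    using assms(1) by (simp add: mult.assoc[symmetric] ennreal_mult[symmetric])
  also have "\<dots> \<le> ennreal (1/l) * 1"
    using assms(2) by (intro mult_left_mono) auto
  finally show ?thesis by simp
qed

lemma (in prob_space) normal_mgf:
  assumes D: "distributed M lborel D (\<lambda>y. ennreal (normal_density 0 s y))" and s: "0 < s"
  shows "(\<integral>\<^sup>+\<omega>. ennreal (exp (g * D \<omega> - g\<^sup>2 * s\<^sup>2 / 2)) \<partial>M) = 1"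
proof -
  have "(\<integral>\<^sup>+\<omega>. ennreal (exp (g * D \<omega> - g\<^sup>2 * s\<^sup>2 / 2)) \<partial>M)
      = (\<integral>\<^sup>+y. ennreal (normal_density 0 s y) * ennreal (exp (g * y - g\<^sup>2 * s\<^sup>2 / 2)) \<partial>lborel)"
    by (rule distributed_nn_integral[OF D, symmetric]) simp
  also have "\<dots> = (\<integral>\<^sup>+y. ennreal (normal_density (g * s\<^sup>2) s y) \<partial>lborel)"
  proof (intro nn_integral_cong)
    fix y :: real
    have "normal_density 0 s y * exp (g * y - g\<^sup>2 * s\<^sup>2 / 2) = normal_density (g * s\<^sup>2) s y"
    proof -
      have "- (y - 0)\<^sup>2 / (2 * s\<^sup>2) + (g * y - g\<^sup>2 * s\<^sup>2 / 2) = - (y - g * s\<^sup>2)\<^sup>2 / (2 * s\<^sup>2)"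
        using s by (simp add: field_simps power2_eq_square)
      then show ?thesis unfolding normal_density_def
        by (simp add: exp_add[symmetric])
    qed
    then show "ennreal (normal_density 0 s y) * ennreal (exp (g * y - g\<^sup>2 * s\<^sup>2 / 2)) = ennreal (normal_density (g * s\<^sup>2) s y)"
      by (simp add: ennreal_mult'[symmetric] normal_density_nonneg)
  qed
  also have "\<dots> = ennreal (\<integral>y. normal_density (g * s\<^sup>2) s y \<partial>lborel)"
    using s by (intro nn_integral_eq_integral) (auto simp: normal_density_nonneg)
  also have "\<dots> = 1" using s by simp
  finally show ?thesis .
qed

locale bmloc = prob_space M for M :: "'a measure" +
  fixes B :: "real \<Rightarrow> 'a \<Rightarrow> real"
  assumes BM: "std_BM M B"
begin

lemma B_meas[measurable]: "B t \<in> borel_measurable M"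
  using BM by (auto simp: std_BM_def)

lemma B0: "\<omega> \<in> space M \<Longrightarrow> B 0 \<omega> = 0"
  using BM by (auto simp: std_BM_def)

lemma B_cont: "\<omega> \<in> space M \<Longrightarrow> continuous_on {0..} (\<lambda>t. B t \<omega>)"
  using BM by (auto simp: std_BM_def)

lemma incr:
  assumes h: "0 < h"
  shows "indep_vars (\<lambda>_. borel) (\<lambda>i \<omega>. B (real (Suc i) * h) \<omega> - B (real i * h) \<omega>) {..<K}"
    "\<And>i. i < K \<Longrightarrow> distributed M lborel (\<lambda>\<omega>. B (real (Suc i) * h) \<omega> - B (real i * h) \<omega>)
                 (\<lambda>y. ennreal (normal_density 0 (sqrt h) y))"
proof -
  have P: "0 \<le> (\<lambda>i. real i * h) 0 \<and> (\<forall>i<K. (\<lambda>i. real i * h) i < (\<lambda>i. real i * h) (Suc i))" using h by auto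
  have *: "real (Suc i) * h - real i * h = h" for i by (simp add: algebra_simps)
  have A: "\<forall>(ts::nat\<Rightarrow>real) k. 0 \<le> ts 0 \<and> (\<forall>i<k. ts i < ts (Suc i)) \<longrightarrow>
        indep_vars (\<lambda>_. borel) (\<lambda>i \<omega>. B (ts (Suc i)) \<omega> - B (ts i) \<omega>) {..<k} \<and>
        (\<forall>i<k. distributed M lborel (\<lambda>\<omega>. B (ts (Suc i)) \<omega> - B (ts i) \<omega>)
                 (\<lambda>y. ennreal (normal_density 0 (sqrt (ts (Suc i) - ts i)) y)))"
    using BM unfolding std_BM_def by blast
  note S = A[rule_format, OF P]
  then show "indep_vars (\<lambda>_. borel) (\<lambda>i \<omega>. B (real (Suc i) * h) \<omega> - B (real i * h) \<omega>) {..<K}"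
    by simp
  fix i assume "i < K"
  with S show "distributed M lborel (\<lambda>\<omega>. B (real (Suc i) * h) \<omega> - B (real i * h) \<omega>)
                 (\<lambda>y. ennreal (normal_density 0 (sqrt h) y))"
    unfolding * by simp
qed

definition Zp :: "real \<Rightarrow> real \<Rightarrow> 'a \<Rightarrow> real" where
  "Zp g t \<omega> = exp (g * B t \<omega> - g\<^sup>2 * t / 2)"

lemma grid_ville:
  assumes h: "0 < h" and l: "0 < l"
  shows "emeasure M {\<omega>\<in>space M. \<exists>j\<le>K. l < Zp g (real j * h) \<omega>} \<le> ennreal (1 / l)"
proof -
  define W where "W i \<omega> = exp (g * (B (real (Suc i) * h) \<omega> - B (real i * h) \<omega>) - g\<^sup>2 * (sqrt h)\<^sup>2 / 2)" for i \<omega>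
  have rv[measurable]: "\<And>i. W i \<in> borel_measurable M" unfolding W_def by measurable
  have ind: "indep_vars (\<lambda>_. borel) W {..<K}"
    unfolding W_def by (rule indep_vars_compose2[OF incr(1)[OF h], where Y="\<lambda>_ x. exp (g * x - g\<^sup>2 * (sqrt h)\<^sup>2 / 2)"]) auto
  have mean: "(\<integral>\<^sup>+\<omega>. ennreal (W i \<omega>) \<partial>M) = 1" if "i < K" for i
    unfolding W_def using h by (intro normal_mgf[OF incr(2)[OF h that]]) auto
  have eq: "Pprod W j \<omega> = Zp g (real j * h) \<omega>" if "\<omega> \<in> space M" for j \<omega>
  proof -
    have "Pprod W j \<omega> = exp (\<Sum>i<j. g * (B (real (Suc i) * h) \<omega> - B (real i * h) \<omega>) - g\<^sup>2 * h / 2)"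
      unfolding Pprod_def W_def using h by (simp add: exp_sum)
    also have "(\<Sum>i<j. g * (B (real (Suc i) * h) \<omega> - B (real i * h) \<omega>) - g\<^sup>2 * h / 2)
        = g * (\<Sum>i<j. B (real (Suc i) * h) \<omega> - B (real i * h) \<omega>) - real j * (g\<^sup>2 * h / 2)"
      by (simp add: sum_subtractf sum_distrib_left right_diff_distrib)
    also have "(\<Sum>i<j. B (real (Suc i) * h) \<omega> - B (real i * h) \<omega>) = B (real j * h) \<omega>"
      using sum_lessThan_telescope[of "\<lambda>i. B (real i * h) \<omega>" j] B0[OF that] by simp
    finally show ?thesis unfolding Zp_def by (simp add: algebra_simps)
  qed
  have "{\<omega>\<in>space M. \<exists>j\<le>K. l < Zp g (real j * h) \<omega>} = Vset M W l K"
    using eq by (auto simp: Vset_def)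
  moreover have "ennreal l * emeasure M (Vset M W l K) \<le> 1"
    by (rule discrete_ville[OF ind _ mean rv]) (auto simp: W_def)
  ultimately show ?thesis using l by (simp add: ennreal_le_inv)
qed

lemma Zp_meas[measurable]: "Zp g t \<in> borel_measurable M"
  unfolding Zp_def by measurable

lemma Zp_cont: "\<omega> \<in> space M \<Longrightarrow> continuous_on {0..} (\<lambda>t. Zp g t \<omega>)"
  unfolding Zp_def using B_cont by (intro continuous_intros) auto

lemma ville_set_eq:
  "{\<omega>\<in>space M. \<exists>t\<ge>0. l < Zp g t \<omega>}
    = (\<Union>n. {\<omega>\<in>space M. \<exists>j\<le>n*2^n. l < Zp g (real j * (1/2^n)) \<omega>})"
proof (intro equalityI subsetI)
  fix \<omega> assume "\<omega> \<in> {\<omega>\<in>space M. \<exists>t\<ge>0. l < Zp g t \<omega>}"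
  then obtain t where om: "\<omega> \<in> space M" and t: "0 \<le> t" "l < Zp g t \<omega>" by auto
  have "\<exists>d>0. \<forall>x'\<in>{0..}. dist x' t < d \<longrightarrow> dist (Zp g x' \<omega>) (Zp g t \<omega>) < Zp g t \<omega> - l"
    using Zp_cont[OF om] t unfolding continuous_on_iff by auto
  then obtain d where d: "0 < d" "\<And>x'. 0 \<le> x' \<Longrightarrow> dist x' t < d \<Longrightarrow> dist (Zp g x' \<omega>) (Zp g t \<omega>) < Zp g t \<omega> - l"
    by auto
  obtain n0 where n0: "(1/2::real)^n0 < d" using real_arch_pow_inv[OF d(1), of "1/2"] by auto
  define n where "n = max n0 (nat \<lceil>t\<rceil>)"
  have "(1/2::real)^n \<le> (1/2)^n0" unfolding n_def by (intro power_decreasing) auto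
  with n0 have nd: "(1/2::real)^n < d" by linarith
  have tn: "t \<le> real n" unfolding n_def by linarith
  define j where "j = nat \<lfloor>t * 2^n\<rfloor>"
  have p2: "(0::real) < 2^n" by simp
  have j1: "real j \<le> t * 2^n" unfolding j_def using t by (simp add: of_nat_nat)
  have j2: "t * 2^n < real j + 1" unfolding j_def using t by (simp add: of_nat_nat)
  have jn: "j \<le> n * 2^n"
  proof -
    have "real j \<le> real n * 2^n" using j1 tn p2 by (meson order.trans mult_right_mono less_imp_le)
    then show ?thesis by (metis of_nat_le_iff of_nat_mult of_nat_numeral of_nat_power)
  qed
  have s0: "0 \<le> real j * (1/2^n)" by simp
  have s1: "real j * (1/2^n) \<le> t" using j1 p2 by (simp add: field_simps)
  have "t < (real j + 1) / 2^n" using j2 p2 by (simp add: pos_less_divide_eq)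
  then have s2: "t - real j * (1/2^n) < 1/2^n" by (simp add: add_divide_distrib)
  have "dist (real j * (1/2^n)) t < d"
    using s1 s2 nd by (simp add: dist_real_def power_one_over)
  then have "dist (Zp g (real j * (1/2^n)) \<omega>) (Zp g t \<omega>) < Zp g t \<omega> - l" using d(2)[OF s0] by auto
  then have "l < Zp g (real j * (1/2^n)) \<omega>" by (simp add: dist_real_def abs_less_iff)
  then show "\<omega> \<in> (\<Union>n. {\<omega>\<in>space M. \<exists>j\<le>n*2^n. l < Zp g (real j * (1/2^n)) \<omega>})"
    using om jn by blast
next
  fix \<omega> assume "\<omega> \<in> (\<Union>n. {\<omega>\<in>space M. \<exists>j\<le>n*2^n. l < Zp g (real j * (1/2^n)) \<omega>})"
  then obtain n j where "\<omega> \<in> space M" "l < Zp g (real j * (1/2^n)) \<omega>" by auto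
  moreover have "0 \<le> real j * (1/2^n)" by simp
  ultimately show "\<omega> \<in> {\<omega>\<in>space M. \<exists>t\<ge>0. l < Zp g t \<omega>}" by blast
qed

lemma ville:
  assumes l: "0 < l"
  shows "{\<omega>\<in>space M. \<exists>t\<ge>0. l < Zp g t \<omega>} \<in> sets M"
    and "emeasure M {\<omega>\<in>space M. \<exists>t\<ge>0. l < Zp g t \<omega>} \<le> ennreal (1 / l)"
proof -
  define Gs where "Gs n = {\<omega>\<in>space M. \<exists>j\<le>n*2^n. l < Zp g (real j * (1/2^n)) \<omega>}" for n :: nat
  have Gs_meas: "Gs n \<in> sets M" for n
  proof -
    have "Gs n = (\<Union>j\<in>{..n*2^n}. {\<omega>\<in>space M. l < Zp g (real j * (1/2^n)) \<omega>})"
      by (auto simp: Gs_def)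
    also have "\<dots> \<in> sets M" by (intro sets.finite_UN) auto
    finally show ?thesis .
  qed
  have inc: "incseq Gs"
  proof (rule incseq_SucI, rule subsetI)
    fix n \<omega> assume "\<omega> \<in> Gs n"
    then obtain j where om: "\<omega> \<in> space M" and j: "j \<le> n*2^n" "l < Zp g (real j * (1/2^n)) \<omega>"
      by (auto simp: Gs_def)
    have "real (2*j) * (1/2^Suc n) = real j * (1/2^n)" by simp
    moreover have "2*j \<le> Suc n * 2^Suc n"
    proof -
      have "2*j \<le> 2*(n*2^n)" using j(1) by simp
      also have "\<dots> \<le> Suc n * 2^Suc n" by simp
      finally show ?thesis .
    qed
    ultimately show "\<omega> \<in> Gs (Suc n)" using om j(2) unfolding Gs_def by (metis (mono_tags, lifting) mem_Collect_eq)
  qed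
  have eq: "{\<omega>\<in>space M. \<exists>t\<ge>0. l < Zp g t \<omega>} = (\<Union>n. Gs n)"
    unfolding Gs_def by (rule ville_set_eq)
  show "{\<omega>\<in>space M. \<exists>t\<ge>0. l < Zp g t \<omega>} \<in> sets M"
    unfolding eq using Gs_meas by auto
  have "emeasure M (\<Union>n. Gs n) = (SUP n. emeasure M (Gs n))"
    using Gs_meas inc by (intro SUP_emeasure_incseq[symmetric]) auto
  also have "\<dots> \<le> ennreal (1 / l)"
  proof (rule SUP_least)
    fix n
    have "(1::real) / 2^n > 0" by simp
    then show "emeasure M (Gs n) \<le> ennreal (1 / l)" unfolding Gs_def by (rule grid_ville[OF _ l])
  qed
  finally show "emeasure M {\<omega>\<in>space M. \<exists>t\<ge>0. l < Zp g t \<omega>} \<le> ennreal (1 / l)"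
    unfolding eq .
qed

lemma Y_tail:
  fixes sg p c :: real
  assumes sg: "0 < sg" and p: "1 < p" and c: "0 < c"
  shows "{\<omega>\<in>space M. \<exists>t\<ge>0. c < exp (sg * B t \<omega> - p * sg\<^sup>2 / 2 * t)} \<in> sets M"
    and "emeasure M {\<omega>\<in>space M. \<exists>t\<ge>0. c < exp (sg * B t \<omega> - p * sg\<^sup>2 / 2 * t)} \<le> ennreal (1 / (c powr p))"
proof -
  have key: "c < exp a \<longleftrightarrow> c powr p < exp (p * a)" for a
  proof
    assume "c < exp a"
    then have "c powr p < exp a powr p" using c p by (intro powr_less_mono2) auto
    then show "c powr p < exp (p * a)" by (simp add: powr_def)
  next
    assume A: "c powr p < exp (p * a)"
    show "c < exp a"
    proof (rule ccontr)
      assume "\<not> c < exp a"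
      then have "exp a powr p \<le> c powr p" using c p by (intro powr_mono2) auto
      with A show False by (simp add: powr_def)
    qed
  qed
  have eq: "{\<omega>\<in>space M. \<exists>t\<ge>0. c < exp (sg * B t \<omega> - p * sg\<^sup>2 / 2 * t)}
      = {\<omega>\<in>space M. \<exists>t\<ge>0. c powr p < Zp (p * sg) t \<omega>}"
  proof -
    have "p * (sg * B t \<omega> - p * sg\<^sup>2 / 2 * t) = (p * sg) * B t \<omega> - (p * sg)\<^sup>2 * t / 2" for t \<omega>
      by (simp add: algebra_simps power2_eq_square)
    then show ?thesis unfolding key Zp_def by simp
  qed
  have cp: "0 < c powr p" using c by simp
  show "{\<omega>\<in>space M. \<exists>t\<ge>0. c < exp (sg * B t \<omega> - p * sg\<^sup>2 / 2 * t)} \<in> sets M"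
    unfolding eq by (rule ville(1)[OF cp])
  show "emeasure M {\<omega>\<in>space M. \<exists>t\<ge>0. c < exp (sg * B t \<omega> - p * sg\<^sup>2 / 2 * t)} \<le> ennreal (1 / (c powr p))"
    unfolding eq by (rule ville(2)[OF cp])
qed

definition Ek :: "real \<Rightarrow> real \<Rightarrow> nat \<Rightarrow> 'a set" where
  "Ek sg p k = {\<omega>\<in>space M. \<exists>t\<ge>0. 2^k < exp (sg * B t \<omega> - p * sg\<^sup>2 / 2 * t)}"

definition Sb :: "real \<Rightarrow> real \<Rightarrow> 'a \<Rightarrow> ennreal" where
  "Sb sg p \<omega> = 1 + (\<Sum>k. ennreal (2^(k+1)) * indicator (Ek sg p k) \<omega>)"

lemma Sb_props:
  fixes sg p :: real
  assumes sg: "0 < sg" and p: "1 < p"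
  shows "Sb sg p \<in> borel_measurable M"
    and "(\<integral>\<^sup>+\<omega>. Sb sg p \<omega> \<partial>M) < \<infinity>"
    and "\<And>\<omega> t. \<omega> \<in> space M \<Longrightarrow> 0 \<le> t \<Longrightarrow> ennreal (exp (sg * B t \<omega> - p * sg\<^sup>2 / 2 * t)) \<le> Sb sg p \<omega>"
proof -
  have Ek_meas[measurable]: "Ek sg p k \<in> sets M" for k
    unfolding Ek_def by (rule Y_tail(1)[OF sg p]) simp
  show "Sb sg p \<in> borel_measurable M" unfolding Sb_def by measurable
  define r where "r = 2 powr (1 - p)"
  have "(2::real) powr (1-p) < 2 powr 0" using p by (intro powr_less_mono) auto
  then have r: "0 < r" "r < 1" unfolding r_def by auto
  have Ek_bound: "emeasure M (Ek sg p k) \<le> ennreal ((2 powr (- p))^k)" for k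
  proof -
    have "emeasure M (Ek sg p k) \<le> ennreal (1 / (((2::real)^k) powr p))"
      unfolding Ek_def by (rule Y_tail(2)[OF sg p]) simp
    also have "((2::real)^k) powr p = (2 powr p)^k"
    proof -
      have "((2::real)^k) powr p = (2 powr real k) powr p" by (simp add: powr_realpow)
      also have "\<dots> = 2 powr (p * real k)" by (simp add: powr_powr mult.commute)
      also have "\<dots> = (2 powr p) powr real k" by (simp add: powr_powr)
      also have "\<dots> = (2 powr p)^k" by (simp add: powr_realpow)
      finally show ?thesis .
    qed
    also have "1 / (2 powr p)^k = (2 powr (-p))^k"
      by (simp add: powr_minus power_one_over divide_inverse power_inverse)
    finally show ?thesis .
  qed
  have "(\<integral>\<^sup>+\<omega>. Sb sg p \<omega> \<partial>M) = 1 + (\<Sum>k. ennreal (2^(k+1)) * emeasure M (Ek sg p k))"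
    unfolding Sb_def
    by (simp add: nn_integral_add nn_integral_suminf nn_integral_cmult_indicator emeasure_space_1)
  also have "\<dots> \<le> 1 + (\<Sum>k. ennreal (2 * r^k))"
  proof (intro add_left_mono suminf_le)
    fix k
    have "ennreal (2^(k+1)) * emeasure M (Ek sg p k) \<le> ennreal (2^(k+1)) * ennreal ((2 powr (- p))^k)"
      by (intro mult_left_mono Ek_bound) auto
    also have "\<dots> = ennreal (2 * r^k)"
    proof -
      have "(2::real)^(k+1) * (2 powr (- p))^k = 2 * (2 * 2 powr (-p))^k"
        by (simp add: power_mult_distrib)
      also have "2 * 2 powr (-p) = r" unfolding r_def by (simp add: powr_diff powr_minus divide_inverse)
      finally show ?thesis by (simp add: ennreal_mult[symmetric] mult.assoc)
    qed
    finally show "ennreal (2^(k+1)) * emeasure M (Ek sg p k) \<le> ennreal (2 * r^k)" .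
  qed auto
  also have "\<dots> = 1 + ennreal (\<Sum>k. 2 * r^k)"
    using r by (subst suminf_ennreal2) (auto intro!: summable_mult summable_geometric)
  also have "\<dots> < \<infinity>" by simp
  finally show "(\<integral>\<^sup>+\<omega>. Sb sg p \<omega> \<partial>M) < \<infinity>" .
next
  fix \<omega> and t :: real assume om: "\<omega> \<in> space M" and t: "0 \<le> t"
  define v where "v = exp (sg * B t \<omega> - p * sg\<^sup>2 / 2 * t)"
  have v0: "0 < v" unfolding v_def by simp
  show "ennreal (exp (sg * B t \<omega> - p * sg\<^sup>2 / 2 * t)) \<le> Sb sg p \<omega>"
  proof (cases "v \<le> 1")
    case True
    then have a: "ennreal v \<le> 1" by (metis ennreal_1 ennreal_leI)
    have "(1::ennreal) \<le> Sb sg p \<omega>" unfolding Sb_def by simp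
    with a show ?thesis unfolding v_def[symmetric] by (rule order.trans)
  next
    case False
    define l where "l = log 2 v"
    have l0: "0 < l" unfolding l_def using False by simp
    have vl: "v = 2 powr l" unfolding l_def using v0 by simp
    define k where "k = nat (\<lceil>l\<rceil> - 1)"
    have kk: "real k = real_of_int \<lceil>l\<rceil> - 1" unfolding k_def using l0
      by (simp add: of_nat_nat)
    have "(2::real)^k = 2 powr (real k)" by (simp add: powr_realpow)
    also have "\<dots> < 2 powr l" using kk by (intro powr_less_mono) linarith+
    finally have k1: "2^k < v" using vl by simp
    have "v \<le> 2 powr (real k + 1)" unfolding vl using kk by (intro powr_mono) linarith+
    also have "\<dots> = 2^(k+1)" by (simp add: powr_add powr_realpow)
    finally have k2: "v \<le> 2^(k+1)" .
    have "\<omega> \<in> Ek sg p k" unfolding Ek_def using om t k1 v_def by auto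
    then have "ennreal (2^(k+1)) \<le> ennreal (2^(k+1)) * indicator (Ek sg p k) \<omega>" by simp
    also have "\<dots> \<le> (\<Sum>k. ennreal (2^(k+1)) * indicator (Ek sg p k) \<omega>)"
      by (rule ennreal_term_le_suminf)
    also have "\<dots> \<le> Sb sg p \<omega>" unfolding Sb_def by simp
    finally show ?thesis using k2 unfolding v_def[symmetric]
      by (meson ennreal_leI order.trans)
  qed
qed

end


lemma mark_meas_gen:
  assumes G: "\<And>k. (\<lambda>(m, u). G k m u) \<in> borel_measurable (borel \<Otimes>\<^sub>M borel)"
    and V: "\<And>i. i < j \<Longrightarrow> V i \<in> borel_measurable Nm"
  shows "(\<lambda>x. mark G V k m j x) \<in> borel_measurable Nm"
  using V
proof (induction j)
  case 0
  then show ?case by simp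
next
  case (Suc j)
  have "(\<lambda>x. (mark G V k m j x, V j x)) \<in> measurable Nm (borel \<Otimes>\<^sub>M borel)"
    using Suc by (intro measurable_Pair) auto
  from measurable_compose[OF this G[of "k + j"]] show ?case by simp
qed

locale mort = prob_space M for M :: "'a measure" +
  fixes lam :: "nat \<Rightarrow> real" and E U :: "nat \<Rightarrow> 'a \<Rightarrow> real"
    and G :: "nat \<Rightarrow> real \<Rightarrow> real \<Rightarrow> real" and N :: nat and mum muM :: real
    and q :: "nat \<Rightarrow> real \<Rightarrow> real measure"
  assumes E_exp: "\<And>j. distributed M lborel (E j) (\<lambda>y. ennreal (exponential_density 1 y))"
    and U_unif: "\<And>j. distributed M lborel (U j) (indicator {0..1})"
    and U_indep: "indep_vars (\<lambda>_. borel) U UNIV"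
    and lam_zero: "\<And>k. k \<ge> N + 1 \<Longrightarrow> lam k = 0"
    and q_prob: "\<And>k m. k < N \<Longrightarrow> m \<in> {mum..muM} \<Longrightarrow>
          prob_space (q k m) \<and> sets (q k m) = sets borel \<and> measure (q k m) {mum..muM} = 1"
    and G_meas: "\<And>k. (\<lambda>(m, u). G k m u) \<in> borel_measurable (borel \<Otimes>\<^sub>M borel)"
    and G_law: "\<And>k m. k < N \<Longrightarrow> m \<in> {mum..muM} \<Longrightarrow>
          distr (uniform_measure lborel {0..1}) borel (G k m) = q k m"
begin

lemma E_meas[measurable]: "E j \<in> borel_measurable M"
  using E_exp[of j] by (auto dest: distributed_measurable)

lemma U_meas[measurable]: "U j \<in> borel_measurable M"
  using U_unif[of j] by (auto dest: distributed_measurable)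

lemma hold_time_meas[measurable]: "hold_time lam E n0 j \<in> borel_measurable M"
  unfolding hold_time_def by measurable

lemma jump_time_meas[measurable]: "jump_time lam E n0 j \<in> borel_measurable M"
  unfolding jump_time_def by measurable

lemma jump_time_top:
  assumes "N - n0 < j"
  shows "jump_time lam E n0 j \<omega> = \<infinity>"
proof -
  have h: "hold_time lam E n0 (N - n0) \<omega> = \<infinity>"
    unfolding hold_time_def using assms lam_zero[of "n0 + (N - n0) + 1"] by simp
  have "jump_time lam E n0 j \<omega> = hold_time lam E n0 (N - n0) \<omega> + (\<Sum>i\<in>{..<j} - {N - n0}. hold_time lam E n0 i \<omega>)"
    unfolding jump_time_def using assms by (subst sum.remove[of _ "N - n0"]) auto
  then show ?thesis using h by simp
qed

lemma njumps_eq: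
  shows "njumps lam E n0 t \<omega> = card {j\<in>{1..N - n0}. jump_time lam E n0 j \<omega> \<le> ennreal t}"
proof -
  have "{j. 0 < j \<and> jump_time lam E n0 j \<omega> \<le> ennreal t} = {j\<in>{1..N - n0}. jump_time lam E n0 j \<omega> \<le> ennreal t}"
  proof (intro equalityI subsetI)
    fix j assume j: "j \<in> {j. 0 < j \<and> jump_time lam E n0 j \<omega> \<le> ennreal t}"
    have "j \<le> N - n0"
    proof (rule ccontr)
      assume "\<not> j \<le> N - n0"
      then have "jump_time lam E n0 j \<omega> = \<infinity>" using jump_time_top by simp
      with j show False by (simp add: top_unique)
    qed
    with j show "j \<in> {j\<in>{1..N - n0}. jump_time lam E n0 j \<omega> \<le> ennreal t}" by auto
  qed auto
  then show ?thesis unfolding njumps_def by simp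
qed

lemma njumps_le: "njumps lam E n0 t \<omega> \<le> N - n0"
proof -
  have "card {j\<in>{1..N - n0}. jump_time lam E n0 j \<omega> \<le> ennreal t} \<le> card {1..N - n0}"
    by (intro card_mono) auto
  then show ?thesis unfolding njumps_eq by simp
qed

lemma njumps_meas:
  assumes T: "T \<in> borel_measurable Nm" and W: "W \<in> measurable Nm M"
  shows "(\<lambda>x. njumps lam E n0 (T x) (W x)) \<in> measurable Nm (count_space UNIV)"
proof -
  have eq: "real (njumps lam E n0 (T x) (W x)) =
      (\<Sum>j\<in>{1..N - n0}. if jump_time lam E n0 j (W x) \<le> ennreal (T x) then 1 else 0)" for x
    unfolding njumps_eq real_of_card by (subst sum.inter_filter) auto
  have [measurable]: "(\<lambda>x. jump_time lam E n0 j (W x)) \<in> borel_measurable Nm" for j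
    using W by measurable
  have [measurable]: "T \<in> borel_measurable Nm" by (rule T)
  have rm: "(\<lambda>x. real (njumps lam E n0 (T x) (W x))) \<in> borel_measurable Nm"
    unfolding eq by measurable
  show ?thesis
  proof (rule measurable_count_space_eq_countable[THEN iffD2], simp, intro conjI ballI, simp)
    fix a :: nat
    have "(\<lambda>x. njumps lam E n0 (T x) (W x)) -` {a} \<inter> space Nm = {x\<in>space Nm. real (njumps lam E n0 (T x) (W x)) = real a}"
      by auto
    also have "\<dots> \<in> sets Nm" using rm by measurable
    finally show "(\<lambda>x. njumps lam E n0 (T x) (W x)) -` {a} \<inter> space Nm \<in> sets Nm" .
  qed
qed

lemma mark_meas:
  assumes Mf: "Mf \<in> borel_measurable Nm" and W: "W \<in> measurable Nm M"
  shows "(\<lambda>x. mark G U k (Mf x) j (W x)) \<in> borel_measurable Nm"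
proof (induction j)
  case 0
  then show ?case using Mf by simp
next
  case (Suc j)
  have U: "(\<lambda>x. U j (W x)) \<in> borel_measurable Nm" using W by measurable
  have "(\<lambda>x. (mark G U k (Mf x) j (W x), U j (W x))) \<in> measurable Nm (borel \<Otimes>\<^sub>M borel)"
    using Suc U by (intro measurable_Pair) auto
  from measurable_compose[OF this G_meas[of "k + j"]] show ?case by simp
qed

lemma mort_mu_meas:
  assumes Mf: "Mf \<in> borel_measurable Nm" and T: "T \<in> borel_measurable Nm"
    and W: "W \<in> measurable Nm M"
  shows "(\<lambda>x. mort_mu lam E U G n0 (Mf x) (T x) (W x)) \<in> borel_measurable Nm"
  unfolding mort_mu_def
  by (rule measurable_compose_countable[where f="\<lambda>j x. mark G U n0 (Mf x) j (W x)", OF mark_meas[OF Mf W] njumps_meas[OF T W]])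

lemma mort_n_meas:
  assumes T: "T \<in> borel_measurable Nm" and W: "W \<in> measurable Nm M"
  shows "(\<lambda>x. mort_n lam E n0 (T x) (W x)) \<in> measurable Nm (count_space UNIV)"
proof -
  have "(\<lambda>x. n0 + njumps lam E n0 (T x) (W x)) \<in> measurable Nm (count_space UNIV)"
    using measurable_compose[OF njumps_meas[OF T W], of "\<lambda>j. n0 + j" "count_space UNIV"] by simp
  then show ?thesis unfolding mort_n_def .
qed

lemma U_emeasure:
  assumes S: "S \<in> sets borel"
  shows "emeasure (distr M borel (U j)) S = emeasure lborel ({0..1} \<inter> S)"
proof -
  have "emeasure (distr M borel (U j)) S = emeasure M (U j -` S \<inter> space M)"
    using S by (intro emeasure_distr) auto
  also have "\<dots> = emeasure (distr M lborel (U j)) S"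
    using S by (intro emeasure_distr[symmetric]) auto
  also have "\<dots> = emeasure (density lborel (indicator {0..1})) S"
    using distributed_distr_eq_density[OF U_unif[of j]] by simp
  also have "\<dots> = (\<integral>\<^sup>+x. indicator {0..1} x * indicator S x \<partial>lborel)"
    using S by (subst emeasure_density) auto
  also have "\<dots> = (\<integral>\<^sup>+x. indicator ({0..1} \<inter> S) x \<partial>lborel)"
    by (intro nn_integral_cong) (auto simp: indicator_def)
  also have "\<dots> = emeasure lborel ({0..1} \<inter> S)"
    using S by (intro nn_integral_indicator) auto
  finally show ?thesis .
qed

lemma G_bad_null:
  assumes k: "k < N" and m: "m \<in> {mum..muM}"
  shows "emeasure lborel ({0..1} \<inter> {u. G k m u \<notin> {mum..muM}}) = 0"
proof -
  have Gm[measurable]: "G k m \<in> borel_measurable borel"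
  proof -
    have "(\<lambda>u. (m, u)) \<in> measurable borel (borel \<Otimes>\<^sub>M borel)" by measurable
    from measurable_compose[OF this G_meas[of k]] show ?thesis by simp
  qed
  interpret q: prob_space "q k m" using q_prob[OF k m] by auto
  have sq: "sets (q k m) = sets borel" using q_prob[OF k m] by auto
  then have spq: "space (q k m) = UNIV" using sets_eq_imp_space_eq[OF sq] by simp
  have Rq: "{mum..muM} \<in> sets (q k m)" using sq by simp
  have "measure (q k m) (space (q k m) - {mum..muM}) = 1 - measure (q k m) {mum..muM}"
    by (rule q.prob_compl[OF Rq])
  then have "measure (q k m) (- {mum..muM}) = 0" using q_prob[OF k m] spq by (simp add: Compl_eq_Diff_UNIV)
  then have q0: "emeasure (q k m) (- {mum..muM}) = 0"
    using q.emeasure_eq_measure by simp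
  have un: "{0..1::real} \<in> sets lborel" "emeasure lborel {0..1::real} = 1" by auto
  have "emeasure (q k m) (- {mum..muM}) = emeasure (distr (uniform_measure lborel {0..1}) borel (G k m)) (- {mum..muM})"
    using G_law[OF k m] by simp
  also have "\<dots> = emeasure (uniform_measure lborel {0..1}) (G k m -` (- {mum..muM}) \<inter> space (uniform_measure lborel {0..1}))"
    by (intro emeasure_distr) auto
  also have "\<dots> = emeasure (uniform_measure lborel {0..1}) {u. G k m u \<notin> {mum..muM}}"
    by (simp add: vimage_def Compl_eq)
  also have "\<dots> = emeasure lborel ({0..1} \<inter> {u. G k m u \<notin> {mum..muM}}) / emeasure lborel {0..1::real}"
  proof (rule emeasure_uniform_measure)
    show "{u. G k m u \<notin> {mum..muM}} \<in> sets lborel" by measurable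
  qed simp
  also have "\<dots> = emeasure lborel ({0..1} \<inter> {u. G k m u \<notin> {mum..muM}})"
    using un by (simp add: divide_ennreal_def)
  finally show ?thesis using q0 by simp
qed

lemma mark_restrict:
  assumes "j' \<le> j"
  shows "mark G U k0 m0 j' \<omega> = mark G (\<lambda>i v. v i) k0 m0 j' (restrict (\<lambda>i. U i \<omega>) {..<j})"
  using assms by (induction j') auto

lemma marks_AE_step:
  assumes k0: "k0 + j < N"
    and IH: "AE \<omega> in M. mark G U k0 m0 j \<omega> \<in> {mum..muM}"
  shows "AE \<omega> in M. mark G U k0 m0 (Suc j) \<omega> \<in> {mum..muM}"
proof -
  define R where "R = {mum..muM}"
  define Phi where "Phi \<omega> = restrict (\<lambda>i. U i \<omega>) {..<j}" for \<omega>
  define phi where "phi v = mark G (\<lambda>i v. v i) k0 m0 j v" for v :: "nat \<Rightarrow> real"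
  define P1 where "P1 = PiM {..<j} (\<lambda>_. borel :: real measure)"
  have Phi_meas[measurable]: "Phi \<in> measurable M P1"
    unfolding Phi_def P1_def by measurable
  have phi_meas[measurable]: "phi \<in> borel_measurable P1"
    unfolding phi_def P1_def by (rule mark_meas_gen[OF G_meas]) auto
  have mk: "mark G U k0 m0 j \<omega> = phi (Phi \<omega>)" for \<omega>
    unfolding phi_def Phi_def by (rule mark_restrict) simp
  have indv: "indep_var P1 Phi (PiM {j} (\<lambda>_. borel)) (\<lambda>\<omega>. restrict (\<lambda>i. U i \<omega>) {j})"
    unfolding P1_def Phi_def by (rule indep_var_restrict[OF U_indep]) auto
  define P2 where "P2 = PiM {j} (\<lambda>_. borel :: real measure)"
  define Psi where "Psi \<omega> = restrict (\<lambda>i. U i \<omega>) {j}" for \<omega>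
  have Psi_meas[measurable]: "Psi \<in> measurable M P2"
    unfolding Psi_def P2_def by measurable
  have joint: "distr M P1 Phi \<Otimes>\<^sub>M distr M P2 Psi = distr M (P1 \<Otimes>\<^sub>M P2) (\<lambda>x. (Phi x, Psi x))"
    using indv unfolding indep_var_distribution_eq P2_def Psi_def by auto
  interpret D2: prob_space "distr M P2 Psi" by (intro prob_space_distr) auto
  define Bd where "Bd = {x \<in> space (P1 \<Otimes>\<^sub>M P2). G (k0 + j) (phi (fst x)) (snd x j) \<notin> R}"
  have Gk[measurable]: "(\<lambda>x. G (k0 + j) (phi (fst x)) (snd x j)) \<in> borel_measurable (P1 \<Otimes>\<^sub>M P2)"
  proof -
    have "(\<lambda>x. (phi (fst x), snd x j)) \<in> measurable (P1 \<Otimes>\<^sub>M P2) (borel \<Otimes>\<^sub>M borel)"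
      unfolding P2_def by measurable
    from measurable_compose[OF this G_meas[of "k0 + j"]] show ?thesis by simp
  qed
  have Bd_meas[measurable]: "Bd \<in> sets (P1 \<Otimes>\<^sub>M P2)"
    unfolding Bd_def R_def by measurable
  have "emeasure M {\<omega>\<in>space M. mark G U k0 m0 (Suc j) \<omega> \<notin> R}
      = emeasure M ((\<lambda>x. (Phi x, Psi x)) -` Bd \<inter> space M)"
    by (intro arg_cong2[where f=emeasure]) (auto simp: Bd_def mk Phi_def Psi_def space_pair_measure P1_def P2_def space_PiM PiE_def)
  also have "\<dots> = emeasure (distr M (P1 \<Otimes>\<^sub>M P2) (\<lambda>x. (Phi x, Psi x))) Bd"
    by (intro emeasure_distr[symmetric]) auto
  also have "\<dots> = emeasure (distr M P1 Phi \<Otimes>\<^sub>M distr M P2 Psi) Bd"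
    using joint by simp
  also have "\<dots> = (\<integral>\<^sup>+v. emeasure (distr M P2 Psi) (Pair v -` Bd) \<partial>distr M P1 Phi)"
    by (intro D2.emeasure_pair_measure_alt) simp
  also have "\<dots> = (\<integral>\<^sup>+v. 0 \<partial>distr M P1 Phi)"
  proof (intro nn_integral_cong_AE)
    have "AE v in distr M P1 Phi. phi v \<in> R"
      using IH unfolding mk R_def by (subst AE_distr_iff) auto
    then show "AE v in distr M P1 Phi. emeasure (distr M P2 Psi) (Pair v -` Bd) = 0"
    proof (rule AE_mp, intro AE_I2 impI)
      fix v assume v: "v \<in> space (distr M P1 Phi)" and pv: "phi v \<in> R"
      have Gv: "(\<lambda>u. G (k0 + j) (phi v) u) \<in> borel_measurable borel"
      proof -
        have "(\<lambda>u. (phi v, u)) \<in> measurable borel (borel \<Otimes>\<^sub>M borel)" by measurable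
        from measurable_compose[OF this G_meas[of "k0 + j"]] show ?thesis by simp
      qed
      have Sb: "{u. G (k0 + j) (phi v) u \<notin> R} \<in> sets borel"
        using Gv unfolding R_def by measurable
      have "Pair v -` Bd = {w \<in> space P2. G (k0 + j) (phi v) (w j) \<notin> R}"
        using v by (auto simp: Bd_def space_pair_measure)
      moreover have "{w \<in> space P2. G (k0 + j) (phi v) (w j) \<notin> R} \<in> sets P2"
      proof -
        have "(\<lambda>w. G (k0 + j) (phi v) (w j)) \<in> borel_measurable P2"
          using Gv unfolding P2_def by measurable
        then show ?thesis unfolding R_def by measurable
      qed
      ultimately have "emeasure (distr M P2 Psi) (Pair v -` Bd)
          = emeasure M (Psi -` {w \<in> space P2. G (k0 + j) (phi v) (w j) \<notin> R} \<inter> space M)"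
        by (simp add: emeasure_distr)
      also have "\<dots> = emeasure M (U j -` {u. G (k0 + j) (phi v) u \<notin> R} \<inter> space M)"
        by (intro arg_cong2[where f=emeasure]) (auto simp: Psi_def P2_def space_PiM PiE_def)
      also have "\<dots> = emeasure (distr M borel (U j)) {u. G (k0 + j) (phi v) u \<notin> R}"
        using Sb by (intro emeasure_distr[symmetric]) auto
      also have "\<dots> = 0"
        using U_emeasure[OF Sb] G_bad_null[OF k0 pv[unfolded R_def]] unfolding R_def by simp
      finally show "emeasure (distr M P2 Psi) (Pair v -` Bd) = 0" .
    qed
  qed
  also have "\<dots> = 0" by simp
  finally have "emeasure M {\<omega>\<in>space M. mark G U k0 m0 (Suc j) \<omega> \<notin> R} = 0" .
  moreover have "{\<omega>\<in>space M. mark G U k0 m0 (Suc j) \<omega> \<notin> R} \<in> sets M"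
  proof -
    have "(\<lambda>\<omega>. mark G U k0 m0 (Suc j) \<omega>) \<in> borel_measurable M"
      using mark_meas[of "\<lambda>_. m0" M "\<lambda>x. x" k0 "Suc j"] by (simp only: measurable_ident_sets) simp
    then show ?thesis unfolding R_def by measurable
  qed
  ultimately show ?thesis unfolding R_def by (intro AE_I[OF subset_refl]) (auto simp: R_def)
qed

lemma marks_AE:
  assumes k0: "k0 \<le> N" and m0: "m0 \<in> {mum..muM}"
  shows "AE \<omega> in M. \<forall>j\<le>N - k0. mark G U k0 m0 j \<omega> \<in> {mum..muM}"
proof -
  have "j \<le> N - k0 \<Longrightarrow> AE \<omega> in M. mark G U k0 m0 j \<omega> \<in> {mum..muM}" for j
  proof (induction j)
    case 0
    then show ?case using m0 by simp
  next
    case (Suc j)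
    then show ?case using k0 by (intro marks_AE_step) auto
  qed
  then show ?thesis by (subst AE_all_countable) (auto simp: AE_ball_countable)
qed

end


lemma exp_int:
  fixes c :: real
  assumes c: "0 < c"
  shows "has_bochner_integral lborel (\<lambda>u. indicator {0..} u * exp (- c * u)) (1 / c)"
proof (rule has_bochner_integral_nn_integral)
  show "(\<lambda>u. indicator {0..} u * exp (- c * u)) \<in> borel_measurable lborel" by measurable
  show "AE x in lborel. 0 \<le> indicator {0..} x * exp (- c * x)" by simp
  show "0 \<le> 1 / c" using c by simp
  interpret P: prob_space "density lborel (exponential_density c)"
    using prob_space_exponential_density[OF c] .
  have "emeasure (density lborel (exponential_density c)) UNIV = 1"
    using P.emeasure_space_1 by simp
  then have one: "(\<integral>\<^sup>+x. ennreal (exponential_density c x) \<partial>lborel) = 1"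
    by (subst (asm) emeasure_density) (auto simp: exponential_density_def)
  have "(\<integral>\<^sup>+x. ennreal (indicator {0..} x * exp (- c * x)) \<partial>lborel)
      = (\<integral>\<^sup>+x. ennreal (1 / c) * ennreal (exponential_density c x) \<partial>lborel)"
    using c by (intro nn_integral_cong) (auto simp: exponential_density_def indicator_def ennreal_mult[symmetric] mult_ac)
  also have "\<dots> = ennreal (1 / c) * (\<integral>\<^sup>+x. ennreal (exponential_density c x) \<partial>lborel)"
    by (rule nn_integral_cmult) (auto simp: exponential_density_def)
  finally show "(\<integral>\<^sup>+x. ennreal (indicator {0..} x * exp (- c * x)) \<partial>lborel) = ennreal (1 / c)"
    using one by simp
qed

lemma disc_nonneg: "0 \<le> disc r mup t"
  unfolding disc_def by simp

lemma disc_bound: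
  fixes mup :: "real \<Rightarrow> real"
  assumes m: "mup \<in> borel_measurable borel" and ab: "\<And>s. a \<le> mup s" "\<And>s. mup s \<le> b" and t: "0 \<le> t"
  shows "disc r mup t \<le> exp (- (r + a) * t)"
proof -
  have si: "set_integrable lborel {0..t} mup"
    unfolding set_integrable_def
  proof (rule integrableI_bounded_set[where A="{0..t}" and B="max \<bar>a\<bar> \<bar>b\<bar>"])
    show "(\<lambda>x. indicator {0..t} x *\<^sub>R mup x) \<in> borel_measurable lborel" using m by measurable
    show "AE x in lborel. x \<in> {0..t} \<longrightarrow> norm (indicator {0..t} x *\<^sub>R mup x) \<le> max \<bar>a\<bar> \<bar>b\<bar>"
    proof (intro AE_I2 impI)
      fix x assume "x \<in> {0..t}"
      have "\<bar>mup x\<bar> \<le> max \<bar>a\<bar> \<bar>b\<bar>" using ab(1)[of x] ab(2)[of x] by (simp add: abs_le_iff) linarith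
      then show "norm (indicator {0..t} x *\<^sub>R mup x) \<le> max \<bar>a\<bar> \<bar>b\<bar>" using \<open>x \<in> {0..t}\<close> by simp
    qed
  qed (use t in \<open>auto simp: indicator_def emeasure_lborel_Icc\<close>)
  have sc: "set_integrable lborel {0..t} (\<lambda>_. a)"
    unfolding set_integrable_def
    by (rule integrableI_bounded_set[where A="{0..t}" and B="\<bar>a\<bar>"])
       (use t in \<open>auto simp: indicator_def emeasure_lborel_Icc\<close>)
  have "a * t = (LBINT s:{0..t}. a)"
    using t by (subst set_integral_const) auto
  also have "\<dots> \<le> (LBINT s:{0..t}. mup s)"
    using ab by (intro set_integral_mono[OF sc si]) auto
  finally have "r * t + a * t \<le> r * t + (LBINT s:{0..t}. mup s)" by simp
  then show ?thesis unfolding disc_def by (simp add: algebra_simps)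
qed

lemma LBINT_bound:
  fixes f g :: "real \<Rightarrow> real"
  assumes g: "integrable lborel (\<lambda>t. indicator {0..} t * g t)"
    and S: "S \<subseteq> {0..}" and fg: "\<And>t. t \<in> S \<Longrightarrow> f t \<le> g t" and g0: "\<And>t. 0 \<le> t \<Longrightarrow> 0 \<le> g t"
  shows "(LBINT t:S. f t) \<le> (\<integral>t. indicator {0..} t * g t \<partial>lborel)"
  unfolding set_lebesgue_integral_def
proof (rule integral_mono'[OF g])
  fix t :: real
  show "indicator S t *\<^sub>R f t \<le> indicator {0..} t * g t"
    using S fg g0 by (auto simp: indicator_def)
  show "0 \<le> indicator {0..} t * g t" using g0 by (auto simp: indicator_def)
qed


lemma disc_meas_gen:
  fixes mup :: "'n \<Rightarrow> real \<Rightarrow> real"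
  assumes mm: "(\<lambda>x. mup (fst x) (snd x)) \<in> borel_measurable (Nm \<Otimes>\<^sub>M lborel)"
  shows "(\<lambda>x. disc r (mup (fst x)) (snd x)) \<in> borel_measurable (Nm \<Otimes>\<^sub>M lborel)"
proof -
  have p: "(\<lambda>y. (fst (fst y), snd y)) \<in> measurable ((Nm \<Otimes>\<^sub>M lborel) \<Otimes>\<^sub>M lborel) (Nm \<Otimes>\<^sub>M lborel)"
    by measurable
  have m2: "(\<lambda>y. mup (fst (fst y)) (snd y)) \<in> borel_measurable ((Nm \<Otimes>\<^sub>M lborel) \<Otimes>\<^sub>M lborel)"
    using measurable_compose[OF p mm] by simp
  have i: "(\<lambda>y. indicator {0..snd (fst y)} (snd y) *\<^sub>R mup (fst (fst y)) (snd y) :: real)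
      \<in> borel_measurable ((Nm \<Otimes>\<^sub>M lborel) \<Otimes>\<^sub>M lborel)"
  proof -
    have "(\<lambda>y. indicator {0..snd (fst y)} (snd y) *\<^sub>R mup (fst (fst y)) (snd y) :: real)
        = (\<lambda>y. (if 0 \<le> snd y \<and> snd y \<le> snd (fst y) then 1 else 0) * mup (fst (fst y)) (snd y))"
      by (auto simp: indicator_def fun_eq_iff)
    also have "\<dots> \<in> borel_measurable ((Nm \<Otimes>\<^sub>M lborel) \<Otimes>\<^sub>M lborel)"
      using m2 by measurable
    finally show ?thesis .
  qed
  have "(\<lambda>x. \<integral>s. indicator {0..snd x} s *\<^sub>R mup (fst x) s \<partial>lborel) \<in> borel_measurable (Nm \<Otimes>\<^sub>M lborel)"
    by (rule lborel.borel_measurable_lebesgue_integral) (use i in \<open>simp add: case_prod_beta\<close>)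
  then show ?thesis unfolding disc_def set_lebesgue_integral_def by measurable
qed

context bmloc
begin

lemma B_joint: "(\<lambda>x. B (max 0 (snd x)) (fst x)) \<in> borel_measurable (M \<Otimes>\<^sub>M lborel)"
proof (rule borel_measurable_LIMSEQ_real)
  define r where "r n t = real_of_int \<lfloor>t * 2^n\<rfloor> / 2^n" for n :: nat and t :: real
  show "(\<lambda>x. B (max 0 (r n (snd x))) (fst x)) \<in> borel_measurable (M \<Otimes>\<^sub>M lborel)" for n
  proof -
    have g: "(\<lambda>x. \<lfloor>snd x * (2::real)^n\<rfloor>) \<in> measurable (M \<Otimes>\<^sub>M lborel) (count_space UNIV)"
    proof (rule measurable_count_space_eq_countable[THEN iffD2], simp, intro conjI ballI, simp)
      fix i :: int
      have "(\<lambda>x. \<lfloor>snd x * (2::real)^n\<rfloor>) -` {i} \<inter> space (M \<Otimes>\<^sub>M lborel)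
          = {x \<in> space (M \<Otimes>\<^sub>M lborel). of_int i \<le> snd x * (2::real)^n \<and> snd x * (2::real)^n < of_int i + 1}"
        by (auto simp: floor_eq_iff)
      also have "\<dots> \<in> sets (M \<Otimes>\<^sub>M lborel)" by measurable
      finally show "(\<lambda>x. \<lfloor>snd x * (2::real)^n\<rfloor>) -` {i} \<inter> space (M \<Otimes>\<^sub>M lborel) \<in> sets (M \<Otimes>\<^sub>M lborel)" .
    qed
    have f: "(\<lambda>x. B (max 0 (real_of_int i / 2^n)) (fst x)) \<in> borel_measurable (M \<Otimes>\<^sub>M lborel)" for i :: int
      by measurable
    show ?thesis unfolding r_def
      by (rule measurable_compose_countable[where f="\<lambda>i x. B (max 0 (real_of_int i / 2^n)) (fst x)", OF f g])
  qed
  fix x :: "'a \<times> real" assume x: "x \<in> space (M \<Otimes>\<^sub>M lborel)"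
  then have om: "fst x \<in> space M" by (auto simp: space_pair_measure)
  define t where "t = snd x"
  have r_lo: "t - (1/2)^n \<le> r n t" for n
  proof -
    have p: "(0::real) < 2^n" by simp
    have "t * 2^n - 1 \<le> real_of_int \<lfloor>t * 2^n\<rfloor>" by linarith
    then have "(t * 2^n - 1) / 2^n \<le> r n t" unfolding r_def using p by (intro divide_right_mono) auto
    then show ?thesis using p by (simp add: diff_divide_distrib power_one_over)
  qed
  have r_up: "r n t \<le> t" for n
  proof -
    have p: "(0::real) < 2^n" by simp
    have "real_of_int \<lfloor>t * 2^n\<rfloor> \<le> t * 2^n" by linarith
    then show ?thesis unfolding r_def using p by (simp add: divide_le_eq)
  qed
  have "(\<lambda>n. (1/2::real)^n) \<longlonglongrightarrow> 0" by (rule LIMSEQ_power_zero) simp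
  then have "(\<lambda>n. t - (1/2::real)^n) \<longlonglongrightarrow> t - 0" by (rule tendsto_diff[OF tendsto_const])
  then have lo: "(\<lambda>n. t - (1/2::real)^n) \<longlonglongrightarrow> t" by simp
  have rt: "(\<lambda>n. r n t) \<longlonglongrightarrow> t"
    by (rule tendsto_sandwich[OF _ _ lo tendsto_const]) (simp_all add: r_lo r_up)
  have "(\<lambda>n. max 0 (r n t)) \<longlonglongrightarrow> max 0 t"
    by (intro tendsto_max tendsto_const rt)
  then have "(\<lambda>n. B (max 0 (r n t)) (fst x)) \<longlonglongrightarrow> B (max 0 t) (fst x)"
    by (rule continuous_on_tendsto_compose[OF B_cont[OF om]]) auto
  then show "(\<lambda>n. B (max 0 (r n (snd x))) (fst x)) \<longlonglongrightarrow> B (max 0 (snd x)) (fst x)"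
    unfolding t_def .
qed

end


locale setting = bmloc M B + mort M lam E U G N mum muM q
  for M :: "'a measure" and B lam E U G N mum muM q +
  fixes th al sg rho nu K rh muh :: real
  assumes params: "th > 0" "al \<ge> 0" "sg > 0" "rho > 0" "0 \<le> nu" "nu \<le> 1" "rh > 0"
      "0 < mum" "mum \<le> muM" "mum \<le> muh" "muh \<le> muM" "th - al - rho - mum < 0"
begin

definition "X1 t \<omega> = Xproc th al sg B 1 t \<omega>"
definition "mu n0 m0 s \<omega> = mort_mu lam E U G n0 m0 s \<omega>"
definition "fh n0 m0 s \<omega> = fhat M rho rh muh lam E U G (mort_n lam E n0 s \<omega>) (mu n0 m0 s \<omega>)"
definition "Acoef n0 m0 \<tau> \<omega> =
   (LBINT t:{t. 0 \<le> t \<and> ennreal t < \<tau> \<omega>}. disc rho (\<lambda>s. mu n0 m0 s \<omega>) t * (al + nu * mu n0 m0 t \<omega>) * X1 t \<omega>)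
   + (if \<tau> \<omega> = \<infinity> then 0 else
        disc rho (\<lambda>s. mu n0 m0 s \<omega>) (enn2real (\<tau> \<omega>)) * fh n0 m0 (enn2real (\<tau> \<omega>)) \<omega> * X1 (enn2real (\<tau> \<omega>)) \<omega>)"
definition "Ccoef n0 m0 \<tau> \<omega> =
   (if \<tau> \<omega> = \<infinity> then 0 else
        - (disc rho (\<lambda>s. mu n0 m0 s \<omega>) (enn2real (\<tau> \<omega>)) * fh n0 m0 (enn2real (\<tau> \<omega>)) \<omega> * K))"

abbreviation "pay x n0 m0 \<tau> \<omega> \<equiv> payoff M B lam E U G th al sg rho nu K rh muh x n0 m0 \<tau> \<omega>"

lemma Xproc_eq: "Xproc th al sg B x t \<omega> = x * X1 t \<omega>"
  unfolding X1_def Xproc_def by simp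

lemma payoff_affine: "pay x n0 m0 \<tau> \<omega> = x * Acoef n0 m0 \<tau> \<omega> + Ccoef n0 m0 \<tau> \<omega>"
proof -
  have "(LBINT t:{t. 0 \<le> t \<and> ennreal t < \<tau> \<omega>}. disc rho (\<lambda>s. mu n0 m0 s \<omega>) t * (al + nu * mu n0 m0 t \<omega>) * (x * X1 t \<omega>))
     = x * (LBINT t:{t. 0 \<le> t \<and> ennreal t < \<tau> \<omega>}. disc rho (\<lambda>s. mu n0 m0 s \<omega>) t * (al + nu * mu n0 m0 t \<omega>) * X1 t \<omega>)"
    by (subst set_integral_mult_right[symmetric]) (simp add: mult_ac)
  then show ?thesis
    unfolding payoff_def Acoef_def Ccoef_def Let_def Xproc_eq fh_def[symmetric] mu_def[symmetric]
    by (simp add: algebra_simps)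
qed

definition "cc = rho + mum"
definition "cp = (th - al + cc) / 2"
definition "eps = cc - cp"
definition "pp = 1 + (cc - (th - al)) / sg\<^sup>2"
definition "Fb = (rh + muh) / (rho + mum)"
definition "K0 = (al + muM) / eps + Fb"
definition "Sr \<omega> = enn2real (Sb sg pp \<omega>)"

lemma cpos: "0 < eps" "1 < pp" "0 < cc" "0 \<le> Fb" "0 \<le> K0"
proof -
  have a: "th - al < cc" using params unfolding cc_def by linarith
  show "0 < eps" unfolding eps_def cp_def using a by simp
  show "1 < pp" unfolding pp_def using a params by (simp add: field_simps)
  show "0 < cc" unfolding cc_def using params by simp
  show "0 \<le> Fb" unfolding Fb_def using params by simp
  then show "0 \<le> K0" unfolding K0_def eps_def cp_def using a params by simp
qed

lemma X1_eq: "X1 t \<omega> = exp (cp * t) * exp (sg * B t \<omega> - pp * sg\<^sup>2 / 2 * t)"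
proof -
  have "cp * t + (sg * B t \<omega> - pp * sg\<^sup>2 / 2 * t) = (th - al - sg\<^sup>2 / 2) * t + sg * B t \<omega>"
    unfolding pp_def cp_def using params by (simp add: field_simps)
  then show ?thesis unfolding X1_def Xproc_def by (simp add: exp_add[symmetric])
qed

lemma X1_nonneg: "0 \<le> X1 t \<omega>"
  unfolding X1_def Xproc_def mult_1 by (rule exp_ge_zero)

lemma mu_path_meas:
  assumes "n0 \<le> N" "\<omega> \<in> space M"
  shows "(\<lambda>s. mu n0 m0 s \<omega>) \<in> borel_measurable borel"
proof -
  have w: "(\<lambda>_. \<omega>) \<in> measurable borel M" using assms(2) by (rule measurable_const)
  have i: "(\<lambda>s::real. s) \<in> borel_measurable borel" by (rule measurable_ident_sets) simp
  have c: "(\<lambda>_::real. m0) \<in> borel_measurable borel" by (rule borel_measurable_const)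
  show ?thesis unfolding mu_def by (rule mort_mu_meas[OF c i w])
qed

lemma mu_good:
  assumes "n0 \<le> N" "m0 \<in> {mum..muM}"
  shows "AE \<omega> in M. \<forall>s. mu n0 m0 s \<omega> \<in> {mum..muM}"
  using marks_AE[OF assms]
proof (rule AE_mp, intro AE_I2 impI allI)
  fix \<omega> s assume "\<forall>j\<le>N - n0. mark G U n0 m0 j \<omega> \<in> {mum..muM}"
  then show "mu n0 m0 s \<omega> \<in> {mum..muM}"
    unfolding mu_def mort_mu_def using njumps_le by blast
qed

lemma mort_n_le: "n0 \<le> N \<Longrightarrow> mort_n lam E n0 s \<omega> \<le> N"
  unfolding mort_n_def using njumps_le[of n0 s \<omega>] by simp

lemma disc_mu:
  assumes "n0 \<le> N" "\<omega> \<in> space M" "\<forall>s. mu n0 m0 s \<omega> \<in> {mum..muM}" "0 \<le> t"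
  shows "disc rho (\<lambda>s. mu n0 m0 s \<omega>) t \<le> exp (- cc * t)"
  unfolding cc_def
  using disc_bound[OF mu_path_meas[OF assms(1,2), of m0], where a=mum and b=muM and t=t and r=rho] assms(3,4)
  by (auto simp: algebra_simps)

lemma fhat_bound:
  assumes k: "k \<le> N" and m: "m \<in> {mum..muM}"
  shows "0 \<le> fhat M rho rh muh lam E U G k m" "fhat M rho rh muh lam E U G k m \<le> Fb"
proof -
  define h where "h \<omega> = (LBINT u:{0..}. disc rho (\<lambda>s. mort_mu lam E U G k m s \<omega>) u)" for \<omega>
  have hb: "AE \<omega> in M. 0 \<le> h \<omega> \<and> h \<omega> \<le> 1 / cc"
    using mu_good[OF k m]
  proof (rule AE_mp, intro AE_I2 impI)
    fix \<omega> assume om: "\<omega> \<in> space M" and g: "\<forall>s. mu k m s \<omega> \<in> {mum..muM}"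
    have "h \<omega> \<le> (\<integral>t. indicator {0..} t * exp (- cc * t) \<partial>lborel)"
      unfolding h_def
    proof (rule LBINT_bound)
      show "integrable lborel (\<lambda>t. indicator {0..} t * exp (- cc * t))"
        using exp_int[OF cpos(3)] by (rule integrable.intros)
      show "disc rho (\<lambda>s. mort_mu lam E U G k m s \<omega>) t \<le> exp (- cc * t)" if "t \<in> {0..}" for t
        using disc_mu[OF k om g, of t] that unfolding mu_def by auto
    qed auto
    also have "\<dots> = 1 / cc" using exp_int[OF cpos(3)] by (rule has_bochner_integral_integral_eq)
    finally have "h \<omega> \<le> 1 / cc" .
    moreover have "0 \<le> h \<omega>"
      unfolding h_def set_lebesgue_integral_def by (intro integral_nonneg_AE AE_I2) (simp add: disc_nonneg)
    ultimately show "0 \<le> h \<omega> \<and> h \<omega> \<le> 1 / cc" by simp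
  qed
  have "(\<integral>\<omega>. h \<omega> \<partial>M) \<le> (\<integral>\<omega>. 1 / cc \<partial>M)"
    using hb cpos(3) by (intro integral_mono_AE') auto
  then have up: "(\<integral>\<omega>. h \<omega> \<partial>M) \<le> 1 / cc" by (simp add: prob_space)
  have lo: "0 \<le> (\<integral>\<omega>. h \<omega> \<partial>M)"
    using hb by (intro integral_nonneg_AE) auto
  have f: "fhat M rho rh muh lam E U G k m = (rh + muh) * (\<integral>\<omega>. h \<omega> \<partial>M)"
    unfolding fhat_def h_def ..
  have rhm: "0 \<le> rh + muh" using params by simp
  show "0 \<le> fhat M rho rh muh lam E U G k m" unfolding f using rhm lo by simp
  have "(rh + muh) * (\<integral>\<omega>. h \<omega> \<partial>M) \<le> (rh + muh) * (1 / cc)"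
    using rhm up by (rule mult_left_mono[rotated])
  then show "fhat M rho rh muh lam E U G k m \<le> Fb" unfolding f Fb_def cc_def by simp
qed

lemma Sr_bound:
  assumes "\<omega> \<in> space M" "Sb sg pp \<omega> \<noteq> \<infinity>" "0 \<le> t"
  shows "exp (sg * B t \<omega> - pp * sg\<^sup>2 / 2 * t) \<le> Sr \<omega>"
proof -
  have "ennreal (exp (sg * B t \<omega> - pp * sg\<^sup>2 / 2 * t)) \<le> Sb sg pp \<omega>"
    using Sb_props(3)[OF params(3) cpos(2) assms(1,3)] .
  then have "enn2real (ennreal (exp (sg * B t \<omega> - pp * sg\<^sup>2 / 2 * t))) \<le> enn2real (Sb sg pp \<omega>)"
    using assms(2) by (intro enn2real_mono) (auto simp: top.not_eq_extremum)
  then show ?thesis unfolding Sr_def by simp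
qed

lemma X1_bound:
  assumes "\<omega> \<in> space M" "Sb sg pp \<omega> \<noteq> \<infinity>" "0 \<le> t"
  shows "X1 t \<omega> \<le> exp (cp * t) * Sr \<omega>"
  unfolding X1_eq using Sr_bound[OF assms] by (intro mult_left_mono) auto

lemma pathwise:
  assumes n0: "n0 \<le> N" and m0: "m0 \<in> {mum..muM}"
  shows "AE \<omega> in M. \<forall>\<tau>. \<bar>Acoef n0 m0 \<tau> \<omega>\<bar> \<le> K0 * Sr \<omega> \<and> \<bar>Ccoef n0 m0 \<tau> \<omega>\<bar> \<le> \<bar>K\<bar> * Fb"
proof -
  have AESb: "AE \<omega> in M. Sb sg pp \<omega> \<noteq> \<infinity>"
    using Sb_props(1,2)[OF params(3) cpos(2)] by (intro nn_integral_PInf_AE) auto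
  show ?thesis
    using mu_good[OF n0 m0] AESb AE_space
  proof (eventually_elim, intro allI conjI)
    fix \<omega> \<tau>
    assume g: "\<forall>s. mu n0 m0 s \<omega> \<in> {mum..muM}" and sb: "Sb sg pp \<omega> \<noteq> \<infinity>" and om: "\<omega> \<in> space M"
    define mp where "mp s = mu n0 m0 s \<omega>" for s
    have mpR: "mum \<le> mp s" "mp s \<le> muM" for s using g unfolding mp_def by auto
    have Sr0: "0 \<le> Sr \<omega>" unfolding Sr_def by simp
    have dX: "disc rho mp t * X1 t \<omega> \<le> exp (- eps * t) * Sr \<omega>" if t: "0 \<le> t" for t
    proof -
      have "disc rho mp t * X1 t \<omega> \<le> exp (- cc * t) * (exp (cp * t) * Sr \<omega>)"
        using disc_mu[OF n0 om g t] X1_bound[OF om sb t] unfolding mp_def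
        by (intro mult_mono) (auto simp: disc_nonneg X1_nonneg)
      also have "\<dots> = exp (- eps * t) * Sr \<omega>"
        unfolding eps_def by (simp add: exp_add[symmetric] algebra_simps)
      finally show ?thesis .
    qed
    have fh_b: "0 \<le> fh n0 m0 s \<omega> \<and> fh n0 m0 s \<omega> \<le> Fb" for s
      unfolding fh_def using fhat_bound[OF mort_n_le[OF n0] g[rule_format, of s]] by simp
    define S where "S = {t. 0 \<le> t \<and> ennreal t < \<tau> \<omega>}"
    define f where "f t = disc rho mp t * (al + nu * mp t) * X1 t \<omega>" for t
    define g' where "g' t = (al + muM) * Sr \<omega> * exp (- eps * t)" for t
    have f0: "0 \<le> f t" for t
    proof -
      have "0 \<le> al + nu * mp t" using params mpR[of t] by (intro add_nonneg_nonneg mult_nonneg_nonneg) auto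
      then show ?thesis unfolding f_def by (intro mult_nonneg_nonneg) (auto simp: disc_nonneg X1_nonneg)
    qed
    have fg: "f t \<le> g' t" if "0 \<le> t" for t
    proof -
      have a: "al + nu * mp t \<le> al + muM"
      proof -
        have "nu * mp t \<le> 1 * muM" using params mpR[of t] by (intro mult_mono) auto
        then show ?thesis by simp
      qed
      have b: "0 \<le> al + nu * mp t" using params mpR[of t] by (intro add_nonneg_nonneg mult_nonneg_nonneg) auto
      have "f t = (disc rho mp t * X1 t \<omega>) * (al + nu * mp t)" unfolding f_def by (simp add: mult_ac)
      also have "\<dots> \<le> (exp (- eps * t) * Sr \<omega>) * (al + muM)"
        by (rule mult_mono[OF dX[OF that] a]) (use b Sr0 in auto)
      finally show ?thesis unfolding g'_def by (simp add: mult_ac)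
    qed
    have gint: "has_bochner_integral lborel (\<lambda>t. indicator {0..} t * g' t) ((al + muM) * Sr \<omega> * (1 / eps))"
    proof -
      have "has_bochner_integral lborel (\<lambda>t. (al + muM) * Sr \<omega> * (indicator {0..} t * exp (- eps * t))) ((al + muM) * Sr \<omega> * (1 / eps))"
        by (intro has_bochner_integral_mult_right exp_int cpos)
      then show ?thesis unfolding g'_def by (simp add: mult_ac)
    qed
    have I_up: "(LBINT t:S. f t) \<le> (al + muM) / eps * Sr \<omega>"
    proof -
      have "(LBINT t:S. f t) \<le> (\<integral>t. indicator {0..} t * g' t \<partial>lborel)"
      proof (rule LBINT_bound)
        show "integrable lborel (\<lambda>t. indicator {0..} t * g' t)" using gint by (rule integrable.intros)
        show "0 \<le> g' t" for t unfolding g'_def using params Sr0 by (intro mult_nonneg_nonneg) auto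
      qed (auto simp: S_def fg)
      also have "\<dots> = (al + muM) * Sr \<omega> * (1 / eps)" using gint by (rule has_bochner_integral_integral_eq)
      finally show ?thesis by simp
    qed
    have I_lo: "0 \<le> (LBINT t:S. f t)"
      unfolding set_lebesgue_integral_def by (intro integral_nonneg_AE AE_I2) (simp add: f0)
    define T where "T = (if \<tau> \<omega> = \<infinity> then 0 else
        disc rho mp (enn2real (\<tau> \<omega>)) * fh n0 m0 (enn2real (\<tau> \<omega>)) \<omega> * X1 (enn2real (\<tau> \<omega>)) \<omega>)"
    have T_b: "0 \<le> T \<and> T \<le> Fb * Sr \<omega>"
    proof (cases "\<tau> \<omega> = \<infinity>")
      case True
      then show ?thesis unfolding T_def using cpos Sr0 by simp
    next
      case False
      define s where "s = enn2real (\<tau> \<omega>)"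
      have s0: "0 \<le> s" unfolding s_def by simp
      have "T = (disc rho mp s * X1 s \<omega>) * fh n0 m0 s \<omega>" unfolding T_def s_def using False by (simp add: mult_ac)
      also have "\<dots> \<le> (exp (- eps * s) * Sr \<omega>) * Fb"
        by (rule mult_mono[OF dX[OF s0]]) (use fh_b[of s] Sr0 in auto)
      also have "\<dots> \<le> (1 * Sr \<omega>) * Fb"
        using cpos s0 Sr0 by (intro mult_right_mono) auto
      finally have up: "T \<le> Fb * Sr \<omega>" by (simp add: mult_ac)
      have "0 \<le> T" unfolding T_def using False fh_b by (auto intro!: mult_nonneg_nonneg simp: disc_nonneg X1_nonneg)
      with up show ?thesis by simp
    qed
    have Aeq: "Acoef n0 m0 \<tau> \<omega> = (LBINT t:S. f t) + T"
      unfolding Acoef_def S_def f_def T_def mp_def ..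
    show "\<bar>Acoef n0 m0 \<tau> \<omega>\<bar> \<le> K0 * Sr \<omega>"
      unfolding Aeq K0_def using I_up I_lo T_b by (simp add: algebra_simps)
    show "\<bar>Ccoef n0 m0 \<tau> \<omega>\<bar> \<le> \<bar>K\<bar> * Fb"
    proof (cases "\<tau> \<omega> = \<infinity>")
      case True
      then show ?thesis unfolding Ccoef_def using cpos by simp
    next
      case False
      define s where "s = enn2real (\<tau> \<omega>)"
      have s0: "0 \<le> s" unfolding s_def by simp
      have d1: "disc rho mp s \<le> 1"
      proof -
        have "disc rho mp s \<le> exp (- cc * s)" using disc_mu[OF n0 om g s0] unfolding mp_def .
        also have "\<dots> \<le> 1" using cpos s0 by simp
        finally show ?thesis .
      qed
      have "\<bar>Ccoef n0 m0 \<tau> \<omega>\<bar> = disc rho mp s * fh n0 m0 s \<omega> * \<bar>K\<bar>"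
        unfolding Ccoef_def s_def mp_def using False fh_b disc_nonneg by (simp add: abs_mult)
      also have "\<dots> \<le> 1 * Fb * \<bar>K\<bar>"
        using d1 fh_b[of s] by (intro mult_mono) (auto simp: disc_nonneg)
      finally show ?thesis by (simp add: mult_ac)
    qed
  qed
qed

lemma stopping_meas:
  assumes "n0 \<le> N" "is_stopping_time M (filt M B lam E U G n0 m0) \<tau>"
  shows "\<tau> \<in> borel_measurable M"
proof -
  have sub: "sets (filt M B lam E U G n0 m0 t) \<subseteq> sets M" for t
  proof -
    define F where "F = ({B s | s. 0 \<le> s \<and> s \<le> t}
                  \<union> {(\<lambda>\<omega>. real (mort_n lam E n0 s \<omega>)) | s. 0 \<le> s \<and> s \<le> t}
                  \<union> {mort_mu lam E U G n0 m0 s | s. 0 \<le> s \<and> s \<le> t})"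
    have Fm: "f \<in> borel_measurable M" if "f \<in> F" for f
    proof -
      have mn: "(\<lambda>\<omega>. mort_n lam E n0 s \<omega>) \<in> measurable M (count_space UNIV)" for s
        using mort_n_meas[of "\<lambda>_. s" M "\<lambda>x. x"] by simp
      have mm: "mort_mu lam E U G n0 m0 s \<in> borel_measurable M" for s
        using mort_mu_meas[of "\<lambda>_. m0" M "\<lambda>_. s" "\<lambda>x. x"] by simp
      have rr: "(real::nat\<Rightarrow>real) \<in> measurable (count_space UNIV) borel" by simp
      from that show ?thesis unfolding F_def
        using measurable_compose[OF mn rr] mm by auto
    qed
    have gs: "gen_sets M F \<union> null_sets M \<subseteq> sets M"
      unfolding gen_sets_def using Fm by (auto intro: measurable_sets)
    have "sets (filt M B lam E U G n0 m0 t) = sigma_sets (space M) (gen_sets M F \<union> null_sets M)"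
      unfolding filt_def F_def[symmetric] using gs sets.sets_into_space by (intro sets_measure_of) auto
    also have "\<dots> \<subseteq> sets M" using gs by (rule sets.sigma_sets_subset)
    finally show ?thesis .
  qed
  show ?thesis
  proof (rule borel_measurableI_le)
    fix y :: ennreal
    show "{\<omega> \<in> space M. \<tau> \<omega> \<le> y} \<in> sets M"
    proof (cases y rule: ennreal_cases)
      case (real r)
      then have "{\<omega> \<in> space M. \<tau> \<omega> \<le> ennreal r} \<in> sets (filt M B lam E U G n0 m0 r)"
        using assms(2) unfolding is_stopping_time_def by auto
      then show ?thesis using sub real by auto
    next
      case top
      then show ?thesis by simp
    qed
  qed
qed


lemma mu_joint: "(\<lambda>x. mu n0 m0 (snd x) (fst x)) \<in> borel_measurable (M \<Otimes>\<^sub>M lborel)"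
  unfolding mu_def by (rule mort_mu_meas) auto

lemma fhat_meas: "fhat M rho rh muh lam E U G k \<in> borel_measurable borel"
proof -
  define mup where "mup y s = mort_mu lam E U G k (fst y) s (snd y)" for y :: "real \<times> 'a" and s
  have mj: "(\<lambda>z. mup (fst z) (snd z)) \<in> borel_measurable ((borel \<Otimes>\<^sub>M M) \<Otimes>\<^sub>M lborel)"
    unfolding mup_def by (rule mort_mu_meas) auto
  have dj: "(\<lambda>z. indicator {0..} (snd z) *\<^sub>R disc rho (mup (fst z)) (snd z) :: real) \<in> borel_measurable ((borel \<Otimes>\<^sub>M M) \<Otimes>\<^sub>M lborel)"
    using disc_meas_gen[OF mj, of rho] by measurable
  have hj: "(\<lambda>y. \<integral>u. indicator {0..} u *\<^sub>R disc rho (mup y) u \<partial>lborel) \<in> borel_measurable (borel \<Otimes>\<^sub>M M)"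
    by (rule lborel.borel_measurable_lebesgue_integral) (use dj in \<open>simp add: case_prod_beta\<close>)
  have "(\<lambda>m. \<integral>\<omega>. (\<integral>u. indicator {0..} u *\<^sub>R disc rho (mup (m, \<omega>)) u \<partial>lborel) \<partial>M) \<in> borel_measurable borel"
    by (rule borel_measurable_lebesgue_integral) (use hj in \<open>simp add: case_prod_beta\<close>)
  then show ?thesis unfolding fhat_def set_lebesgue_integral_def mup_def by simp
qed

lemma coef_meas':
  assumes tm[measurable]: "\<tau> \<in> borel_measurable M"
  shows "Acoef n0 m0 \<tau> \<in> borel_measurable M" "Ccoef n0 m0 \<tau> \<in> borel_measurable M"
proof -
  define X1' where "X1' x = exp ((th - al - sg\<^sup>2 / 2) * snd x + sg * B (max 0 (snd x)) (fst x))" for x :: "'a \<times> real"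
  have Bj[measurable]: "(\<lambda>x. B (max 0 (snd x)) (fst x)) \<in> borel_measurable (M \<Otimes>\<^sub>M lborel)" by (rule B_joint)
  have X1'm[measurable]: "X1' \<in> borel_measurable (M \<Otimes>\<^sub>M lborel)" unfolding X1'_def by measurable
  have X1eq: "X1 t \<omega> = X1' (\<omega>, t)" if "0 \<le> t" for t \<omega> unfolding X1_def Xproc_def X1'_def using that by simp
  define D where "D x = disc rho (\<lambda>s. mu n0 m0 s (fst x)) (snd x)" for x :: "'a \<times> real"
  have muj[measurable]: "(\<lambda>x. mu n0 m0 (snd x) (fst x)) \<in> borel_measurable (M \<Otimes>\<^sub>M lborel)" by (rule mu_joint)
  have Dm[measurable]: "D \<in> borel_measurable (M \<Otimes>\<^sub>M lborel)"
    unfolding D_def using disc_meas_gen[of "\<lambda>\<omega> s. mu n0 m0 s \<omega>" M rho] muj by simp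
  define H where "H x = (if 0 \<le> snd x \<and> ennreal (snd x) < \<tau> (fst x) then D x * (al + nu * mu n0 m0 (snd x) (fst x)) * X1' x else 0)" for x
  have Hm: "H \<in> borel_measurable (M \<Otimes>\<^sub>M lborel)" unfolding H_def by measurable
  have Req: "(LBINT t:{t. 0 \<le> t \<and> ennreal t < \<tau> \<omega>}. disc rho (\<lambda>s. mu n0 m0 s \<omega>) t * (al + nu * mu n0 m0 t \<omega>) * X1 t \<omega>)
      = (\<integral>t. H (\<omega>, t) \<partial>lborel)" for \<omega>
    unfolding set_lebesgue_integral_def H_def D_def
    by (intro Bochner_Integration.integral_cong refl) (auto simp: indicator_def X1eq)
  have Rm: "(\<lambda>\<omega>. \<integral>t. H (\<omega>, t) \<partial>lborel) \<in> borel_measurable M"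
    by (rule lborel.borel_measurable_lebesgue_integral) (use Hm in \<open>simp add: case_prod_beta\<close>)
  define s where "s \<omega> = enn2real (\<tau> \<omega>)" for \<omega>
  have sm[measurable]: "s \<in> borel_measurable M" unfolding s_def by measurable
  have pm: "(\<lambda>\<omega>. (\<omega>, s \<omega>)) \<in> measurable M (M \<Otimes>\<^sub>M lborel)" by measurable
  have Ds[measurable]: "(\<lambda>\<omega>. D (\<omega>, s \<omega>)) \<in> borel_measurable M" using measurable_compose[OF pm Dm] by simp
  have Xs[measurable]: "(\<lambda>\<omega>. X1' (\<omega>, s \<omega>)) \<in> borel_measurable M" using measurable_compose[OF pm X1'm] by simp
  have mus: "(\<lambda>\<omega>. mu n0 m0 (s \<omega>) \<omega>) \<in> borel_measurable M"
    unfolding mu_def by (rule mort_mu_meas) auto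
  have FH[measurable]: "(\<lambda>\<omega>. fh n0 m0 (s \<omega>) \<omega>) \<in> borel_measurable M"
    unfolding fh_def
  proof (rule measurable_compose_countable[where f="\<lambda>k \<omega>. fhat M rho rh muh lam E U G k (mu n0 m0 (s \<omega>) \<omega>)"])
    show "(\<lambda>\<omega>. fhat M rho rh muh lam E U G k (mu n0 m0 (s \<omega>) \<omega>)) \<in> borel_measurable M" for k
      using measurable_compose[OF mus fhat_meas[of k]] by simp
    show "(\<lambda>\<omega>. mort_n lam E n0 (s \<omega>) \<omega>) \<in> measurable M (count_space UNIV)"
      by (rule mort_n_meas) auto
  qed
  have s0: "0 \<le> s \<omega>" for \<omega> unfolding s_def by simp
  have Aeq: "Acoef n0 m0 \<tau> = (\<lambda>\<omega>. (\<integral>t. H (\<omega>, t) \<partial>lborel) +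
      (if \<tau> \<omega> = \<infinity> then 0 else D (\<omega>, s \<omega>) * fh n0 m0 (s \<omega>) \<omega> * X1' (\<omega>, s \<omega>)))"
    unfolding Acoef_def Req by (auto simp: fun_eq_iff D_def s_def[symmetric] X1eq[OF s0])
  show "Acoef n0 m0 \<tau> \<in> borel_measurable M" unfolding Aeq using Rm by measurable
  have Ceq: "Ccoef n0 m0 \<tau> = (\<lambda>\<omega>. if \<tau> \<omega> = \<infinity> then 0 else - (D (\<omega>, s \<omega>) * fh n0 m0 (s \<omega>) \<omega> * K))"
    unfolding Ccoef_def by (auto simp: fun_eq_iff D_def s_def[symmetric])
  show "Ccoef n0 m0 \<tau> \<in> borel_measurable M" unfolding Ceq by measurable
qed


lemma coef_meas:
  assumes "n0 \<le> N" "\<tau> \<in> borel_measurable M"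
  shows "Acoef n0 m0 \<tau> \<in> borel_measurable M" "Ccoef n0 m0 \<tau> \<in> borel_measurable M"
  using coef_meas'[OF assms(2)] by auto

lemma Sr_integrable: "integrable M Sr"
proof (rule integrableI_bounded)
  have Sbm[measurable]: "Sb sg pp \<in> borel_measurable M" by (rule Sb_props(1)[OF params(3) cpos(2)])
  show "Sr \<in> borel_measurable M" unfolding Sr_def by measurable
  have "(\<integral>\<^sup>+x. ennreal (norm (Sr x)) \<partial>M) \<le> (\<integral>\<^sup>+x. Sb sg pp x \<partial>M)"
  proof (intro nn_integral_mono)
    fix x
    show "ennreal (norm (Sr x)) \<le> Sb sg pp x"
      unfolding Sr_def by (cases "Sb sg pp x" rule: ennreal_cases) auto
  qed
  also have "\<dots> < \<infinity>" by (rule Sb_props(2)[OF params(3) cpos(2)])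
  finally show "(\<integral>\<^sup>+x. ennreal (norm (Sr x)) \<partial>M) < \<infinity>" .
qed

lemma coef_bounds:
  obtains L0 C0 where "0 \<le> L0" "\<And>n0 m0 \<tau>. n0 \<le> N \<Longrightarrow> m0 \<in> {mum..muM} \<Longrightarrow> \<tau> \<in> borel_measurable M \<Longrightarrow>
     integrable M (Acoef n0 m0 \<tau>) \<and> integrable M (Ccoef n0 m0 \<tau>) \<and>
     \<bar>\<integral>\<omega>. Acoef n0 m0 \<tau> \<omega> \<partial>M\<bar> \<le> L0 \<and> \<bar>\<integral>\<omega>. Ccoef n0 m0 \<tau> \<omega> \<partial>M\<bar> \<le> C0"
proof -
  have Sr0: "0 \<le> Sr \<omega>" for \<omega> unfolding Sr_def by simp
  have KSi: "integrable M (\<lambda>\<omega>. K0 * Sr \<omega>)" using Sr_integrable by simp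
  have L0: "0 \<le> K0 * (\<integral>\<omega>. Sr \<omega> \<partial>M)" using cpos Sr0 by (intro mult_nonneg_nonneg integral_nonneg_AE) auto
  have "integrable M (Acoef n0 m0 \<tau>) \<and> integrable M (Ccoef n0 m0 \<tau>) \<and>
     \<bar>\<integral>\<omega>. Acoef n0 m0 \<tau> \<omega> \<partial>M\<bar> \<le> K0 * (\<integral>\<omega>. Sr \<omega> \<partial>M) \<and> \<bar>\<integral>\<omega>. Ccoef n0 m0 \<tau> \<omega> \<partial>M\<bar> \<le> \<bar>K\<bar> * Fb"
    if n0: "n0 \<le> N" and m0: "m0 \<in> {mum..muM}" and tm: "\<tau> \<in> borel_measurable M" for n0 m0 \<tau>
  proof -
    note am = coef_meas(1)[OF n0 tm, of m0] and cm = coef_meas(2)[OF n0 tm, of m0]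
    have pw: "AE \<omega> in M. \<bar>Acoef n0 m0 \<tau> \<omega>\<bar> \<le> K0 * Sr \<omega> \<and> \<bar>Ccoef n0 m0 \<tau> \<omega>\<bar> \<le> \<bar>K\<bar> * Fb"
      using pathwise[OF n0 m0] by eventually_elim auto
    have AI: "integrable M (Acoef n0 m0 \<tau>)"
      using pw cpos Sr0 by (intro Bochner_Integration.integrable_bound[OF KSi am]) (auto elim!: AE_mp intro!: AE_I2)
    have CI: "integrable M (Ccoef n0 m0 \<tau>)"
      using pw cpos by (intro Bochner_Integration.integrable_bound[OF integrable_const[of "\<bar>K\<bar> * Fb"] cm]) (auto elim!: AE_mp intro!: AE_I2)
    have "\<bar>\<integral>\<omega>. Acoef n0 m0 \<tau> \<omega> \<partial>M\<bar> \<le> (\<integral>\<omega>. \<bar>Acoef n0 m0 \<tau> \<omega>\<bar> \<partial>M)"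
      using integral_norm_bound[of M "Acoef n0 m0 \<tau>"] by simp
    also have "\<dots> \<le> (\<integral>\<omega>. K0 * Sr \<omega> \<partial>M)"
      using pw AI KSi by (intro integral_mono_AE) (auto elim!: AE_mp intro!: AE_I2)
    also have "\<dots> = K0 * (\<integral>\<omega>. Sr \<omega> \<partial>M)" by simp
    finally have A: "\<bar>\<integral>\<omega>. Acoef n0 m0 \<tau> \<omega> \<partial>M\<bar> \<le> K0 * (\<integral>\<omega>. Sr \<omega> \<partial>M)" .
    have "\<bar>\<integral>\<omega>. Ccoef n0 m0 \<tau> \<omega> \<partial>M\<bar> \<le> (\<integral>\<omega>. \<bar>Ccoef n0 m0 \<tau> \<omega>\<bar> \<partial>M)"
      using integral_norm_bound[of M "Ccoef n0 m0 \<tau>"] by simp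
    also have "\<dots> \<le> (\<integral>\<omega>. \<bar>K\<bar> * Fb \<partial>M)"
      using pw CI by (intro integral_mono_AE) (auto elim!: AE_mp intro!: AE_I2)
    also have "\<dots> = \<bar>K\<bar> * Fb" by (simp add: prob_space)
    finally show ?thesis using A AI CI by simp
  qed
  then show ?thesis using that[OF L0] by blast
qed

abbreviation "VV x n0 m0 \<equiv> VN M B lam E U G th al sg rho nu K rh muh x n0 m0"

lemma exp_pay:
  assumes "integrable M (Acoef n0 m0 \<tau>)" "integrable M (Ccoef n0 m0 \<tau>)"
  shows "(\<integral>\<omega>. pay x n0 m0 \<tau> \<omega> \<partial>M) = x * (\<integral>\<omega>. Acoef n0 m0 \<tau> \<omega> \<partial>M) + (\<integral>\<omega>. Ccoef n0 m0 \<tau> \<omega> \<partial>M)"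
  unfolding payoff_affine using assms by simp

lemma main:
  shows "(\<forall>n\<le>N. \<forall>m\<in>{mum..muM}. \<forall>x y t. 0 < x \<longrightarrow> 0 < y \<longrightarrow> 0 \<le> t \<longrightarrow> t \<le> 1 \<longrightarrow>
            VV (t * x + (1 - t) * y) n m \<le> ereal t * VV x n m + ereal (1 - t) * VV y n m)
       \<and> (\<exists>L>0. \<forall>n\<le>N. \<forall>m\<in>{mum..muM}. \<forall>x y. 0 < x \<longrightarrow> 0 < y \<longrightarrow>
            \<bar>VV x n m - VV y n m\<bar> \<le> ereal (L * \<bar>x - y\<bar>))"
proof -
  obtain L0 C0 where L0: "0 \<le> L0" and cb: "\<And>n0 m0 \<tau>. n0 \<le> N \<Longrightarrow> m0 \<in> {mum..muM} \<Longrightarrow> \<tau> \<in> borel_measurable M \<Longrightarrow>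
     integrable M (Acoef n0 m0 \<tau>) \<and> integrable M (Ccoef n0 m0 \<tau>) \<and>
     \<bar>\<integral>\<omega>. Acoef n0 m0 \<tau> \<omega> \<partial>M\<bar> \<le> L0 \<and> \<bar>\<integral>\<omega>. Ccoef n0 m0 \<tau> \<omega> \<partial>M\<bar> \<le> C0"
    using coef_bounds by blast
  define T where "T n m = {\<tau>. is_stopping_time M (filt M B lam E U G n m) \<tau>}" for n m
  have VVdef: "VV x n m = (SUP \<tau> \<in> T n m. ereal (\<integral>\<omega>. pay x n m \<tau> \<omega> \<partial>M))" for x n m
    unfolding VN_def T_def ..
  define a where "a n m \<tau> = (\<integral>\<omega>. Acoef n m \<tau> \<omega> \<partial>M)" for n m \<tau>
  define c where "c n m \<tau> = (\<integral>\<omega>. Ccoef n m \<tau> \<omega> \<partial>M)" for n m \<tau>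
  have Ep: "(\<integral>\<omega>. pay x n m \<tau> \<omega> \<partial>M) = x * a n m \<tau> + c n m \<tau>"
    and ab: "\<bar>a n m \<tau>\<bar> \<le> L0" "\<bar>c n m \<tau>\<bar> \<le> C0"
    if "n \<le> N" "m \<in> {mum..muM}" "\<tau> \<in> T n m" for x n m \<tau>
  proof -
    have "\<tau> \<in> borel_measurable M" using stopping_meas[OF that(1)] that(3) by (auto simp: T_def)
    note cbt = cb[OF that(1,2) this]
    show "(\<integral>\<omega>. pay x n m \<tau> \<omega> \<partial>M) = x * a n m \<tau> + c n m \<tau>"
      unfolding a_def c_def using cbt by (intro exp_pay) auto
    show "\<bar>a n m \<tau>\<bar> \<le> L0" "\<bar>c n m \<tau>\<bar> \<le> C0" unfolding a_def c_def using cbt by auto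
  qed
  have inf_T: "(\<lambda>_. \<infinity>) \<in> T n m" for n m
  proof -
    have "{\<omega>\<in>space M. (\<infinity>::ennreal) \<le> ennreal t} = {}" for t by (auto simp: top_unique)
    then show ?thesis unfolding T_def is_stopping_time_def
      by (simp only: mem_Collect_eq sets.empty_sets) simp
  qed
  have conv: "VV (t * x + (1 - t) * y) n m \<le> ereal t * VV x n m + ereal (1 - t) * VV y n m"
    if nm: "n \<le> N" "m \<in> {mum..muM}" and t: "0 \<le> t" "t \<le> 1" for n m x y t
    unfolding VVdef[of "t * x + (1 - t) * y"]
  proof (rule SUP_least)
    fix \<tau> assume \<tau>: "\<tau> \<in> T n m"
    have "ereal (\<integral>\<omega>. pay (t * x + (1 - t) * y) n m \<tau> \<omega> \<partial>M)
        = ereal t * ereal (\<integral>\<omega>. pay x n m \<tau> \<omega> \<partial>M) + ereal (1 - t) * ereal (\<integral>\<omega>. pay y n m \<tau> \<omega> \<partial>M)"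
      unfolding Ep[OF nm \<tau>] by (simp add: algebra_simps)
    also have "\<dots> \<le> ereal t * VV x n m + ereal (1 - t) * VV y n m"
    proof (intro add_mono ereal_mult_left_mono)
      show "ereal (\<integral>\<omega>. pay x n m \<tau> \<omega> \<partial>M) \<le> VV x n m"
        unfolding VVdef using \<tau> by (rule SUP_upper)
      show "ereal (\<integral>\<omega>. pay y n m \<tau> \<omega> \<partial>M) \<le> VV y n m"
        unfolding VVdef using \<tau> by (rule SUP_upper)
    qed (use t in auto)
    finally show "ereal (\<integral>\<omega>. pay (t * x + (1 - t) * y) n m \<tau> \<omega> \<partial>M) \<le> ereal t * VV x n m + ereal (1 - t) * VV y n m" .
  qed
  have upper: "VV x n m \<le> VV y n m + ereal (L0 * \<bar>x - y\<bar>)"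
    if nm: "n \<le> N" "m \<in> {mum..muM}" for n m x y
    unfolding VVdef[of x]
  proof (rule SUP_least)
    fix \<tau> assume \<tau>: "\<tau> \<in> T n m"
    have "(\<integral>\<omega>. pay x n m \<tau> \<omega> \<partial>M) = (\<integral>\<omega>. pay y n m \<tau> \<omega> \<partial>M) + (x - y) * a n m \<tau>"
      unfolding Ep[OF nm \<tau>] by (simp add: algebra_simps)
    also have "\<dots> \<le> (\<integral>\<omega>. pay y n m \<tau> \<omega> \<partial>M) + \<bar>x - y\<bar> * L0"
    proof -
      have "(x - y) * a n m \<tau> \<le> \<bar>(x - y) * a n m \<tau>\<bar>" by (rule abs_ge_self)
      also have "\<dots> \<le> \<bar>x - y\<bar> * L0" unfolding abs_mult using ab(1)[OF nm \<tau>] by (intro mult_left_mono) auto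
      finally show ?thesis by simp
    qed
    finally have "ereal (\<integral>\<omega>. pay x n m \<tau> \<omega> \<partial>M) \<le> ereal (\<integral>\<omega>. pay y n m \<tau> \<omega> \<partial>M) + ereal (L0 * \<bar>x - y\<bar>)"
      by (simp add: mult.commute)
    also have "\<dots> \<le> VV y n m + ereal (L0 * \<bar>x - y\<bar>)"
    proof (intro add_mono)
      show "ereal (\<integral>\<omega>. pay y n m \<tau> \<omega> \<partial>M) \<le> VV y n m"
        unfolding VVdef using \<tau> by (rule SUP_upper)
    qed simp
    finally show "ereal (\<integral>\<omega>. pay x n m \<tau> \<omega> \<partial>M) \<le> VV y n m + ereal (L0 * \<bar>x - y\<bar>)" .
  qed
  have fin: "\<exists>r. VV x n m = ereal r" if nm: "n \<le> N" "m \<in> {mum..muM}" for n m x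
  proof -
    have "VV x n m \<le> ereal (\<bar>x\<bar> * L0 + C0)"
      unfolding VVdef
    proof (rule SUP_least)
      fix \<tau> assume \<tau>: "\<tau> \<in> T n m"
      have "x * a n m \<tau> \<le> \<bar>x * a n m \<tau>\<bar>" by (rule abs_ge_self)
      also have "\<dots> \<le> \<bar>x\<bar> * L0" unfolding abs_mult using ab(1)[OF nm \<tau>] by (intro mult_left_mono) auto
      finally have "x * a n m \<tau> \<le> \<bar>x\<bar> * L0" .
      moreover have "c n m \<tau> \<le> C0" using ab(2)[OF nm \<tau>] by simp
      ultimately show "ereal (\<integral>\<omega>. pay x n m \<tau> \<omega> \<partial>M) \<le> ereal (\<bar>x\<bar> * L0 + C0)"
        unfolding Ep[OF nm \<tau>] by simp
    qed
    moreover have "ereal (\<integral>\<omega>. pay x n m (\<lambda>_. \<infinity>) \<omega> \<partial>M) \<le> VV x n m"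
      unfolding VVdef using inf_T by (rule SUP_upper)
    ultimately show ?thesis by (cases "VV x n m") auto
  qed
  have lip: "\<bar>VV x n m - VV y n m\<bar> \<le> ereal ((L0 + 1) * \<bar>x - y\<bar>)"
    if nm: "n \<le> N" "m \<in> {mum..muM}" for n m x y
  proof -
    obtain r1 where r1: "VV x n m = ereal r1" using fin[OF nm] by blast
    obtain r2 where r2: "VV y n m = ereal r2" using fin[OF nm] by blast
    have "r1 \<le> r2 + L0 * \<bar>x - y\<bar>" using upper[OF nm, of x y] r1 r2 by simp
    moreover have "r2 \<le> r1 + L0 * \<bar>x - y\<bar>" using upper[OF nm, of y x] r1 r2 by (simp add: abs_minus_commute)
    ultimately have "\<bar>r1 - r2\<bar> \<le> L0 * \<bar>x - y\<bar>" by linarith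
    also have "\<dots> \<le> (L0 + 1) * \<bar>x - y\<bar>" by (simp add: mult_right_mono)
    finally show ?thesis using r1 r2 by simp
  qed
  show ?thesis
  proof (intro conjI)
    show "\<forall>n\<le>N. \<forall>m\<in>{mum..muM}. \<forall>x y t. 0 < x \<longrightarrow> 0 < y \<longrightarrow> 0 \<le> t \<longrightarrow> t \<le> 1 \<longrightarrow>
            VV (t * x + (1 - t) * y) n m \<le> ereal t * VV x n m + ereal (1 - t) * VV y n m"
      using conv by blast
    show "\<exists>L>0. \<forall>n\<le>N. \<forall>m\<in>{mum..muM}. \<forall>x y. 0 < x \<longrightarrow> 0 < y \<longrightarrow>
            \<bar>VV x n m - VV y n m\<bar> \<le> ereal (L * \<bar>x - y\<bar>)"
      using L0 lip by (intro exI[of _ "L0 + 1"]) auto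
  qed
qed

end


theorem proposition5p2:
  fixes M :: "'a measure" and B :: "real \<Rightarrow> 'a \<Rightarrow> real"
    and E U :: "nat \<Rightarrow> 'a \<Rightarrow> real"
    and lam :: "nat \<Rightarrow> real" and N :: nat
    and q :: "nat \<Rightarrow> real \<Rightarrow> real measure"
    and G :: "nat \<Rightarrow> real \<Rightarrow> real \<Rightarrow> real"
    and \<theta> \<alpha> \<sigma> \<rho> \<nu> K \<rho>h \<mu>m \<mu>M \<mu>h :: real
  assumes M: "prob_space M"
    and BM: "std_BM M B"
    and E_exp: "\<And>j. distributed M lborel (E j) (\<lambda>y. ennreal (exponential_density 1 y))"
    and E_indep: "prob_space.indep_vars M (\<lambda>_. borel) E UNIV"
    and U_unif: "\<And>j. distributed M lborel (U j) (indicator {0..1})"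
    and U_indep: "prob_space.indep_vars M (\<lambda>_. borel) U UNIV"
    and BEU_indep: "prob_space.indep_sets M
          (\<lambda>i::nat. sigma_sets (space M) (gen_sets M
             (if i = 0 then {B t | t. 0 \<le> t} else if i = 1 then range E else range U))) {0, 1, 2}"
    and params: "\<theta> > 0" "\<alpha> \<ge> 0" "\<sigma> > 0" "\<rho> > 0" "0 \<le> \<nu>" "\<nu> \<le> 1" "\<rho>h > 0"
      "0 < \<mu>m" "\<mu>m \<le> \<mu>M" "\<mu>m \<le> \<mu>h" "\<mu>h \<le> \<mu>M" "\<theta> - \<alpha> - \<rho> - \<mu>m < 0"
    and lam_nonneg: "\<And>k. lam k \<ge> 0"
    and lam_zero: "\<And>k. k \<ge> N + 1 \<Longrightarrow> lam k = 0"
    and q_prob: "\<And>k m. k < N \<Longrightarrow> m \<in> {\<mu>m..\<mu>M} \<Longrightarrow>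
          prob_space (q k m) \<and> sets (q k m) = sets borel \<and> measure (q k m) {\<mu>m..\<mu>M} = 1"
    and q_meas: "\<And>k A. k < N \<Longrightarrow> A \<in> sets borel \<Longrightarrow>
          (\<lambda>m. measure (q k m) A) \<in> borel_measurable (restrict_space borel {\<mu>m..\<mu>M})"
    and G_meas: "\<And>k. (\<lambda>(m, u). G k m u) \<in> borel_measurable (borel \<Otimes>\<^sub>M borel)"
    and G_law: "\<And>k m. k < N \<Longrightarrow> m \<in> {\<mu>m..\<mu>M} \<Longrightarrow>
          distr (uniform_measure lborel {0..1}) borel (G k m) = q k m"
  shows "(\<forall>n\<le>N. \<forall>m\<in>{\<mu>m..\<mu>M}. \<forall>x y t. 0 < x \<longrightarrow> 0 < y \<longrightarrow> 0 \<le> t \<longrightarrow> t \<le> 1 \<longrightarrow>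
            VN M B lam E U G \<theta> \<alpha> \<sigma> \<rho> \<nu> K \<rho>h \<mu>h (t * x + (1 - t) * y) n m
              \<le> ereal t * VN M B lam E U G \<theta> \<alpha> \<sigma> \<rho> \<nu> K \<rho>h \<mu>h x n m
                + ereal (1 - t) * VN M B lam E U G \<theta> \<alpha> \<sigma> \<rho> \<nu> K \<rho>h \<mu>h y n m)
       \<and> (\<exists>L>0. \<forall>n\<le>N. \<forall>m\<in>{\<mu>m..\<mu>M}. \<forall>x y. 0 < x \<longrightarrow> 0 < y \<longrightarrow>
            \<bar>VN M B lam E U G \<theta> \<alpha> \<sigma> \<rho> \<nu> K \<rho>h \<mu>h x n m
              - VN M B lam E U G \<theta> \<alpha> \<sigma> \<rho> \<nu> K \<rho>h \<mu>h y n m\<bar> \<le> ereal (L * \<bar>x - y\<bar>))"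
  proof -
  interpret S: setting M B lam E U G N \<mu>m \<mu>M q \<theta> \<alpha> \<sigma> \<rho> \<nu> K \<rho>h \<mu>h
    by (intro setting.intro bmloc.intro mort.intro setting_axioms.intro bmloc_axioms.intro mort_axioms.intro)
       (assumption | rule M BM E_exp U_unif U_indep lam_zero q_prob G_meas G_law params)+
  show ?thesis by (rule S.main)
qed

end
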